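(* Let $U\subset\mathbb{R}^n$ be open, $V\in C(\mathbb{T}^n)$, $c\in\mathbb{R}$, and let $w_1,w_2\in W^{1,\infty}(U)$ satisfy $\frac12|Dw_i|^2+V(x)\le c$ for a.e. $x\in U$, $i=1,2$. Suppose there is $\eta\in AC([a,b],U)$ such that for $i=1,2$, $$\int_a^b\Big(\tfrac12|\dot\eta(t)|^2-V(\eta(t))+c\Big)\,dt=w_i(\eta(b))-w_i(\eta(a)).$$ Then: (1) $\frac12|\dot\eta(t)|^2+V(\eta(t))=c$ for a.e. $t\in[a,b]$ (in particular $\eta$ is Lipschitz); (2) if $\eta$ is differentiable at $t_0\in(a,b)$, then $w_1,w_2$ are differentiable at $\eta(t_0)$ and $Dw_1(\eta(t_0))=Dw_2(\eta(t_0))=\dot\eta(t_0)$; (3) for every $x\in\eta((a,b))$, $w_1-w_2$ is differentiable at $x$ and $D(w_1-w_2)(x)=0$.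
   Context: $V$ is a continuous $\mathbb{Z}^n$-periodic function on $\mathbb{R}^n$. $AC([a,b],U)$ denotes absolutely continuous curves $[a,b]\to U$. *)

theory Defs
  imports "HOL-Analysis.Analysis"
begin

text \<open>Continuous \<open>\<int>\<^sup>n\<close>-periodic potential on \<open>\<real>\<^sup>n\<close>, i.e. an element of \<open>C(\<T>\<^sup>n)\<close>.\<close>
definition periodic_potential :: "(real^'n \<Rightarrow> real) \<Rightarrow> bool" where
  "periodic_potential V \<longleftrightarrow> continuous_on UNIV V \<and>
     (\<forall>x k. (\<forall>i. k $ i \<in> \<int>) \<longrightarrow> V (x + k) = V x)"

definition AC_curve :: "real \<Rightarrow> real \<Rightarrow> 'a::real_normed_vector set \<Rightarrow> (real \<Rightarrow> 'a) \<Rightarrow> bool" where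
  "AC_curve a b U \<eta> \<longleftrightarrow> \<eta> ` {a..b} \<subseteq> U \<and>
     (\<forall>\<epsilon>>0. \<exists>\<delta>>0. \<forall>D. finite D \<and> (\<forall>(s,t)\<in>D. a \<le> s \<and> s < t \<and> t \<le> b) \<and>
        pairwise (\<lambda>(s,t) (s',t'). {s<..<t} \<inter> {s'<..<t'} = {}) D \<and>
        (\<Sum>(s,t)\<in>D. t - s) < \<delta> \<longrightarrow> (\<Sum>(s,t)\<in>D. norm (\<eta> t - \<eta> s)) < \<epsilon>)"

definition test_function :: "(real^'n) set \<Rightarrow> (real^'n \<Rightarrow> real) \<Rightarrow> (real^'n \<Rightarrow> real^'n) \<Rightarrow> bool" where
  "test_function U \<phi> d\<phi> \<longleftrightarrow>
     (\<forall>x. (\<phi> has_derivative (\<lambda>h. d\<phi> x \<bullet> h)) (at x)) \<and> continuous_on UNIV d\<phi> \<and>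
     compact (closure {x. \<phi> x \<noteq> 0}) \<and> closure {x. \<phi> x \<noteq> 0} \<subseteq> U"

definition weak_gradient_on :: "(real^'n) set \<Rightarrow> (real^'n \<Rightarrow> real) \<Rightarrow> (real^'n \<Rightarrow> real^'n) \<Rightarrow> bool" where
  "weak_gradient_on U w g \<longleftrightarrow>
     (\<forall>\<phi> d\<phi> i. test_function U \<phi> d\<phi> \<longrightarrow>
        ((\<lambda>x. g x $ i * \<phi> x) absolutely_integrable_on U) \<and>
        ((\<lambda>x. w x * d\<phi> x $ i) absolutely_integrable_on U) \<and>
        integral U (\<lambda>x. w x * d\<phi> x $ i) = - integral U (\<lambda>x. g x $ i * \<phi> x))"

text \<open>\<open>w \<in> W\<^sup>1\<^sup>,\<^sup>\<infinity>(U)\<close> (continuous representative) with weak gradient \<open>g \<in> L\<^sup>\<infinity>(U)\<close>.\<close>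
definition W1inf_grad :: "(real^'n) set \<Rightarrow> (real^'n \<Rightarrow> real) \<Rightarrow> (real^'n \<Rightarrow> real^'n) \<Rightarrow> bool" where
  "W1inf_grad U w g \<longleftrightarrow>
     continuous_on U w \<and> (\<exists>M. \<forall>x\<in>U. \<bar>w x\<bar> \<le> M) \<and>
     g \<in> borel_measurable (lebesgue_on U) \<and>
     (\<exists>M. AE x in lebesgue. x \<in> U \<longrightarrow> norm (g x) \<le> M) \<and>
     weak_gradient_on U w g"

end

theory Submission
  imports Defs
begin


definition mq :: "real \<Rightarrow> real" where "mq s = (max 0 s)\<^sup>2"

lemma mq_deriv: "(mq has_real_derivative (2 * max 0 s)) (at s)"
proof (cases "s = 0")
  case True
  show ?thesis
    unfolding True has_field_derivative_iff
  proof -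
    have "((\<lambda>y. (mq y - mq 0) / (y - 0)) \<longlongrightarrow> 0) (at 0)"
    proof (rule tendsto_sandwich[where f="\<lambda>y. - \<bar>y\<bar>" and h="\<lambda>y. \<bar>y\<bar>"])
      show "\<forall>\<^sub>F n in at 0. - \<bar>n\<bar> \<le> (mq n - mq 0) / (n - 0)"
        by (auto simp: mq_def power2_eq_square max_def divide_simps intro!: always_eventually)
      show "\<forall>\<^sub>F n in at 0. (mq n - mq 0) / (n - 0) \<le> \<bar>n\<bar>"
        by (auto simp: mq_def power2_eq_square max_def divide_simps intro!: always_eventually)
      show "((\<lambda>y. - \<bar>y\<bar>) \<longlongrightarrow> 0) (at (0::real))"
        by (intro tendsto_eq_intros) auto
      show "((\<lambda>y. \<bar>y\<bar>) \<longlongrightarrow> 0) (at (0::real))"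
        by (intro tendsto_eq_intros) auto
    qed
    then show "((\<lambda>y. (mq y - mq 0) / (y - 0)) \<longlongrightarrow> 2 * max 0 0) (at 0)" by simp
  qed
next
  case False
  show ?thesis
  proof (cases "s > 0")
    case True
    have "((\<lambda>x. x\<^sup>2) has_real_derivative 2 * max 0 s) (at s)"
      using True by (auto intro!: derivative_eq_intros)
    then show ?thesis
      apply (rule has_field_derivative_transform_within_open[where S="{0<..}"])
      using True by (auto simp: mq_def)
  next
    case F: False
    have "((\<lambda>x. 0) has_real_derivative 2 * max 0 s) (at s)"
      using F False by (auto intro!: derivative_eq_intros)
    then show ?thesis
      apply (rule has_field_derivative_transform_within_open[where S="{..<0}"])
      using F False by (auto simp: mq_def)
  qed
qed

lemma mq_nonneg: "mq s \<ge> 0" by (simp add: mq_def)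
lemma mq_pos_iff: "mq s \<noteq> 0 \<longleftrightarrow> s > 0" by (auto simp: mq_def max_def)
lemma continuous_mq: "continuous_on A mq"
  unfolding mq_def by (intro continuous_intros)

definition bump :: "'a::real_inner \<Rightarrow> real \<Rightarrow> 'a \<Rightarrow> real" where
  "bump x e v = mq (e\<^sup>2 - (v - x) \<bullet> (v - x))"
definition dbump :: "'a::real_inner \<Rightarrow> real \<Rightarrow> 'a \<Rightarrow> 'a" where
  "dbump x e v = (- (4 * max 0 (e\<^sup>2 - (v - x) \<bullet> (v - x)))) *\<^sub>R (v - x)"

lemma bump_has_derivative:
  "(bump x e has_derivative (\<lambda>h. dbump x e v \<bullet> h)) (at v)"
proof -
  have 1: "((\<lambda>v. e\<^sup>2 - (v - x) \<bullet> (v - x)) has_derivative (\<lambda>h. - (h \<bullet> (v - x) + (v - x) \<bullet> h))) (at v)"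
    by (auto intro!: derivative_eq_intros)
  have 2: "(mq has_derivative (\<lambda>y. y * (2 * max 0 (e\<^sup>2 - (v - x) \<bullet> (v - x))))) (at (e\<^sup>2 - (v - x) \<bullet> (v - x)))"
    using mq_deriv[of "e\<^sup>2 - (v - x) \<bullet> (v - x)", THEN has_field_derivative_imp_has_derivative]
    by (rule has_derivative_eq_rhs) (simp add: fun_eq_iff mult.commute)
  show ?thesis
    unfolding bump_def
    using has_derivative_compose[OF 1 2]
    by (rule has_derivative_eq_rhs) (auto simp: dbump_def fun_eq_iff inner_commute algebra_simps)
qed

lemma continuous_dbump: "continuous_on A (dbump x e)"
  unfolding dbump_def by (intro continuous_intros)

lemma continuous_bump: "continuous_on A (bump x e)"
  unfolding bump_def by (intro continuous_on_compose2[OF continuous_mq] continuous_intros) auto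

lemma bump_nonneg: "bump x e v \<ge> 0" by (simp add: bump_def mq_nonneg)

lemma bump_support: "e > 0 \<Longrightarrow> {v. bump x e v \<noteq> 0} = ball x e"
proof -
  assume e: "e > 0"
  have "e\<^sup>2 - (v - x) \<bullet> (v - x) > 0 \<longleftrightarrow> dist x v < e" for v
  proof -
    have "(v - x) \<bullet> (v - x) = (dist x v)\<^sup>2"
      by (simp add: dist_norm norm_minus_commute power2_norm_eq_inner)
    then show ?thesis using e
      using zero_le_dist[of x v] abs_le_square_iff[of e "dist x v"] by (auto simp: not_le[symmetric])
  qed
  then show ?thesis unfolding bump_def mq_pos_iff by auto
qed


lemma has_integral_supp_UNIV:
  fixes f :: "'a::euclidean_space \<Rightarrow> 'b::banach"
  assumes "C \<subseteq> S" "\<And>x. x \<notin> C \<Longrightarrow> f x = 0"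
  shows "(f has_integral i) S \<longleftrightarrow> (f has_integral i) UNIV"
proof -
  have "(\<lambda>x. if x \<in> S then f x else 0) = f"
  proof (rule ext)
    fix x show "(if x \<in> S then f x else 0) = f x" using assms by (cases "x \<in> C") auto
  qed
  then show ?thesis using has_integral_restrict_UNIV[of S f i] by simp
qed

lemma cball_sub_cbox:
  fixes x :: "'a::euclidean_space"
  shows "cball x r \<subseteq> cbox (x - r *\<^sub>R One) (x + r *\<^sub>R One)"
proof
  fix v assume "v \<in> cball x r"
  then have n: "norm (v - x) \<le> r" by (simp add: dist_norm norm_minus_commute)
  show "v \<in> cbox (x - r *\<^sub>R One) (x + r *\<^sub>R One)"
    unfolding mem_box
  proof
    fix i :: 'a assume i: "i \<in> Basis"
    have "\<bar>(v - x) \<bullet> i\<bar> \<le> r" using Basis_le_norm[OF i, of "v - x"] n by simp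
    then show "(x - r *\<^sub>R One) \<bullet> i \<le> v \<bullet> i \<and> v \<bullet> i \<le> (x + r *\<^sub>R One) \<bullet> i"
      using i by (auto simp: inner_diff_left inner_add_left abs_le_iff)
  qed
qed

lemma bump_zero_outside: "e > 0 \<Longrightarrow> v \<notin> ball x e \<Longrightarrow> bump x e v = 0"
  using bump_support[of e x] by auto

lemma bump_zero_outside': "e > 0 \<Longrightarrow> v \<notin> cball x e \<Longrightarrow> bump x e v = 0"
  using bump_zero_outside[of e v x] by auto

lemma bump_has_integral:
  fixes x :: "'a::euclidean_space"
  assumes e: "e > 0"
  shows "(bump x e has_integral integral UNIV (bump (0::'a) e)) UNIV"
proof -
  let ?B0 = "cbox (- (e *\<^sub>R One)) (e *\<^sub>R One) :: 'a set"
  have sub0: "cball (0::'a) e \<subseteq> ?B0" using cball_sub_cbox[of "0::'a" e] by simp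
  have "bump (0::'a) e integrable_on ?B0"
    by (rule integrable_continuous) (rule continuous_bump)
  then have h0: "(bump (0::'a) e has_integral integral ?B0 (bump 0 e)) ?B0" by blast
  then have "(bump (0::'a) e has_integral integral ?B0 (bump 0 e)) UNIV"
    using has_integral_supp_UNIV[OF sub0, of "bump 0 e"] bump_zero_outside'[OF e] by blast
  then have eqI: "integral UNIV (bump (0::'a) e) = integral ?B0 (bump 0 e)" by blast
  have "((bump 0 e \<circ> (+) (-x)) has_integral integral ?B0 (bump 0 e))
          (cbox (x - e *\<^sub>R One) (x + e *\<^sub>R One))"
    using has_integral_shift_cbox_iff[of "bump 0 e" "-x" _ "x - e *\<^sub>R One" "x + e *\<^sub>R One"] h0
    by (simp add: mult.commute)
  moreover have "bump 0 e \<circ> (+) (-x) = bump x e"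
    by (simp add: fun_eq_iff bump_def)
  ultimately have "(bump x e has_integral integral ?B0 (bump 0 e)) (cbox (x - e *\<^sub>R One) (x + e *\<^sub>R One))"
    by (simp add: mult.commute)
  then have "(bump x e has_integral integral ?B0 (bump 0 e)) UNIV"
    using has_integral_supp_UNIV[OF cball_sub_cbox[of x e], where f="bump x e"] bump_zero_outside'[OF e] by blast
  then show ?thesis using eqI by simp
qed

lemma bump_integral_pos:
  assumes e: "e > 0"
  shows "integral UNIV (bump (0::'a::euclidean_space) e) > 0"
proof -
  define \<delta> where "\<delta> = e / (2 * DIM('a))"
  have dpos: "\<delta> > 0" using e by (simp add: \<delta>_def)
  let ?B = "cbox (- (\<delta> *\<^sub>R One)) (\<delta> *\<^sub>R One) :: 'a set"
  define c where "c = (3 * e\<^sup>2 / 4)\<^sup>2"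
  have cpos: "c > 0" using e by (simp add: c_def)
  have cont: "measure lborel ?B > 0"
    by (rule content_pos_lt) (use dpos in auto)
  have l: "((\<lambda>v. if v \<in> ?B then c else 0) has_integral (c * measure lborel ?B)) UNIV"
    using has_integral_restrict_UNIV[of ?B "\<lambda>_. c" "c * measure lborel ?B"] has_integral_const[of c "- (\<delta> *\<^sub>R One)" "\<delta> *\<^sub>R One"]
    by (simp add: mult.commute)
  have le: "(if v \<in> ?B then c else 0) \<le> bump 0 e v" for v
  proof (cases "v \<in> ?B")
    case True
    have "norm v \<le> (\<Sum>b\<in>Basis. \<bar>v \<bullet> b\<bar>)" by (rule norm_le_l1)
    also have "\<dots> \<le> (\<Sum>b\<in>(Basis::'a set). \<delta>)"
    proof (rule sum_mono)
      fix b :: 'a assume "b \<in> Basis"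
      then show "\<bar>v \<bullet> b\<bar> \<le> \<delta>" using True by (auto simp: mem_box abs_le_iff inner_minus_left)
    qed
    also have "\<dots> = e / 2" using e by (simp add: \<delta>_def)
    finally have nv: "norm v \<le> e / 2" .
    have "v \<bullet> v = (norm v)\<^sup>2" by (simp add: power2_norm_eq_inner)
    also have "\<dots> \<le> (e/2)\<^sup>2" using nv by (intro power_mono) auto
    finally have "3 * e\<^sup>2 / 4 \<le> e\<^sup>2 - v \<bullet> v" by (simp add: power_divide)
    have m: "max 0 (e\<^sup>2 - v \<bullet> v) = e\<^sup>2 - v \<bullet> v"
      using \<open>3 * e\<^sup>2 / 4 \<le> e\<^sup>2 - v \<bullet> v\<close> zero_le_power2[of e] by (subst max_absorb2) linarith+
    have "3 * e\<^sup>2 / 4 \<ge> 0" by simp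
    then have "c \<le> mq (e\<^sup>2 - v \<bullet> v)" unfolding c_def mq_def m
      using \<open>3 * e\<^sup>2 / 4 \<le> e\<^sup>2 - v \<bullet> v\<close> by (intro power_mono) auto
    then show ?thesis using True by (simp add: bump_def)
  next
    case False
    then show ?thesis by (simp add: bump_nonneg)
  qed
  have "c * measure lborel ?B \<le> integral UNIV (bump (0::'a) e)"
    using has_integral_le[OF l bump_has_integral[OF e, of 0]] le by auto
  moreover have "c * measure lborel ?B > 0" using cpos cont by simp
  ultimately show ?thesis by linarith
qed


lemma bump_line_eq:
  "bump (x + s *\<^sub>R d) e v = mq (e\<^sup>2 - ((v - x) \<bullet> (v - x) - 2 * s * ((v - x) \<bullet> d) + s\<^sup>2 * (d \<bullet> d)))"
  unfolding bump_def
  by (simp add: algebra_simps inner_diff_left inner_diff_right inner_commute power2_eq_square)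

lemma bump_line_deriv:
  "((\<lambda>s. bump (x + s *\<^sub>R d) e v) has_real_derivative
     2 * max 0 (e\<^sup>2 - (v - (x + s *\<^sub>R d)) \<bullet> (v - (x + s *\<^sub>R d))) * (2 * ((v - (x + s *\<^sub>R d)) \<bullet> d))) (at s)"
proof -
  let ?q = "\<lambda>s. e\<^sup>2 - ((v - x) \<bullet> (v - x) - 2 * s * ((v - x) \<bullet> d) + s\<^sup>2 * (d \<bullet> d))"
  have q: "(?q has_real_derivative (2 * ((v - x) \<bullet> d) - 2 * s * (d \<bullet> d))) (at s)"
    by (auto intro!: derivative_eq_intros)
  have "((\<lambda>s. mq (?q s)) has_real_derivative 2 * max 0 (?q s) * (2 * ((v - x) \<bullet> d) - 2 * s * (d \<bullet> d))) (at s)"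
    using DERIV_chain2[OF mq_deriv q] .
  moreover have "?q s = e\<^sup>2 - (v - (x + s *\<^sub>R d)) \<bullet> (v - (x + s *\<^sub>R d))"
    by (simp add: algebra_simps inner_diff_left inner_diff_right inner_commute power2_eq_square)
  moreover have "(2 * ((v - x) \<bullet> d) - 2 * s * (d \<bullet> d)) = 2 * ((v - (x + s *\<^sub>R d)) \<bullet> d)"
    by (simp add: algebra_simps inner_diff_left inner_diff_right inner_commute)
  ultimately show ?thesis unfolding bump_line_eq by simp
qed

lemma test_function_bump:
  fixes z :: "real^'n"
  assumes "e > 0" "cball z e \<subseteq> U"
  shows "test_function U (bump z e) (dbump z e)"
  unfolding test_function_def
  using assms bump_support[OF assms(1), of z] closure_ball[OF assms(1), of z]
  by (auto simp: bump_has_derivative continuous_dbump)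

lemma max_bump_zero_outside:
  assumes "e > 0" "v \<notin> ball z e" shows "max 0 (e\<^sup>2 - (v - z) \<bullet> (v - z)) = 0"
proof -
  have "dist z v \<ge> e" using assms by auto
  then have "e\<^sup>2 \<le> (dist z v)\<^sup>2" using assms by (intro power_mono) auto
  moreover have "(v - z) \<bullet> (v - z) = (dist z v)\<^sup>2"
    by (simp add: dist_norm norm_minus_commute power2_norm_eq_inner)
  ultimately show ?thesis by (auto simp: max_def)
qed

lemma dbump_zero_outside: "e > 0 \<Longrightarrow> v \<notin> ball z e \<Longrightarrow> dbump z e v = 0"
  using max_bump_zero_outside[of e v z] by (simp add: dbump_def)


lemma integral_bound_nonneg:
  fixes f :: "'a::euclidean_space \<Rightarrow> real"
  assumes "(f has_integral I) S" "(h has_integral J) S" "\<And>v. v \<in> S \<Longrightarrow> \<bar>f v\<bar> \<le> h v"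
  shows "\<bar>I\<bar> \<le> J"
  using integral_norm_bound_integral[of f S h] assms
  by (auto simp: integral_unique has_integral_integrable)

lemma weak_grad_increment:
  fixes w :: "real^'n \<Rightarrow> real" and g :: "real^'n \<Rightarrow> real^'n"
  assumes wg: "weak_gradient_on U w g"
    and e: "e > 0" and sub: "cball z e \<subseteq> U"
    and Nneg: "negligible Nset"
    and bd: "\<And>v. v \<in> ball z e \<Longrightarrow> v \<notin> Nset \<Longrightarrow> norm (g v) \<le> K" and K: "K \<ge> 0"
    and fx: "\<And>v. fxv v = - (\<Sum>i\<in>UNIV. d $ i * (w v * dbump z e v $ i))"
  shows "\<bar>integral U fxv\<bar> \<le> K * norm d * integral UNIV (bump (0::real^'n) e)"
proof -
  have tf: "test_function U (bump z e) (dbump z e)" by (rule test_function_bump[OF e sub])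
  have wd: "((\<lambda>x. g x $ i * bump z e x) absolutely_integrable_on U) \<and>
        ((\<lambda>x. w x * dbump z e x $ i) absolutely_integrable_on U) \<and>
        integral U (\<lambda>x. w x * dbump z e x $ i) = - integral U (\<lambda>x. g x $ i * bump z e x)" for i
    using wg tf unfolding weak_gradient_on_def by blast
  have i1: "(\<lambda>x. w x * dbump z e x $ i) integrable_on U" for i
    using wd[of i] set_lebesgue_integral_eq_integral(1) by blast
  have i2: "(\<lambda>x. g x $ i * bump z e x) integrable_on U" for i
    using wd[of i] set_lebesgue_integral_eq_integral(1) by blast
  have "integral U fxv = - (\<Sum>i\<in>UNIV. d $ i * integral U (\<lambda>v. w v * dbump z e v $ i))"
    unfolding fx[abs_def] integral_neg
    by (subst integral_sum) (auto intro!: integrable_on_mult_right i1)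
  also have "\<dots> = (\<Sum>i\<in>UNIV. d $ i * integral U (\<lambda>v. g v $ i * bump z e v))"
    using wd by (simp add: sum_negf[symmetric])
  also have "\<dots> = integral U (\<lambda>v. (\<Sum>i\<in>UNIV. d $ i * (g v $ i * bump z e v)))"
    by (subst integral_sum) (auto intro!: integrable_on_mult_right i2)
  also have "\<dots> = integral U (\<lambda>v. (g v \<bullet> d) * bump z e v)"
    by (rule arg_cong[where f="integral U"]) (simp add: fun_eq_iff inner_vec_def sum_distrib_left sum_distrib_right mult_ac)
  finally have eq: "integral U fxv = integral U (\<lambda>v. (g v \<bullet> d) * bump z e v)" .
  have int3: "(\<lambda>v. (g v \<bullet> d) * bump z e v) integrable_on U"
  proof -
    have "(\<lambda>v. (\<Sum>i\<in>UNIV. d $ i * (g v $ i * bump z e v))) integrable_on U"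
      by (auto intro!: integrable_sum integrable_on_mult_right i2)
    moreover have "(\<lambda>v. (\<Sum>i\<in>UNIV. d $ i * (g v $ i * bump z e v))) = (\<lambda>v. (g v \<bullet> d) * bump z e v)"
      by (simp add: fun_eq_iff inner_vec_def sum_distrib_left sum_distrib_right mult_ac)
    ultimately show ?thesis by simp
  qed
  define h where "h v = (if v \<in> Nset then 0 else (g v \<bullet> d) * bump z e v)" for v
  have hI: "integral U h = integral U (\<lambda>v. (g v \<bullet> d) * bump z e v)"
    by (rule integral_spike[OF Nneg]) (auto simp: h_def)
  have hi: "h integrable_on U"
    by (rule integrable_spike[OF int3 Nneg]) (auto simp: h_def)
  have bI: "(bump z e has_integral integral UNIV (bump (0::real^'n) e)) U"
    using has_integral_supp_UNIV[OF order.trans[OF ball_subset_cball sub], of "bump z e"]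
      bump_has_integral[OF e, of z] bump_zero_outside[OF e] by blast
  have "(h has_integral integral U h) U" using hi by blast
  moreover have "((\<lambda>v. K * norm d * bump z e v) has_integral K * norm d * integral UNIV (bump (0::real^'n) e)) U"
    using has_integral_mult_right[OF bI] by simp
  moreover have "\<bar>h v\<bar> \<le> K * norm d * bump z e v" for v
  proof (cases "v \<in> Nset \<or> v \<notin> ball z e")
    case True
    then show ?thesis using bump_nonneg[of z e v] bump_zero_outside[OF e, of v z] K
      by (auto simp: h_def)
  next
    case False
    then have "norm (g v) \<le> K" using bd by auto
    moreover have "\<bar>g v \<bullet> d\<bar> \<le> norm (g v) * norm d" by (rule Cauchy_Schwarz_ineq2)
    ultimately have "\<bar>g v \<bullet> d\<bar> \<le> K * norm d" by (meson mult_right_mono norm_ge_zero order_trans)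
    then show ?thesis using False bump_nonneg[of z e v]
      by (auto simp: h_def abs_mult intro: mult_right_mono)
  qed
  ultimately have "\<bar>integral U h\<bar> \<le> K * norm d * integral UNIV (bump (0::real^'n) e)"
    by (rule integral_bound_nonneg)
  then show ?thesis using eq hI by simp
qed


lemma approx_by_bump:
  fixes w :: "real^'n \<Rightarrow> real"
  assumes e: "e > 0"
    and close: "\<And>v. v \<in> cball x e \<Longrightarrow> \<bar>wt v - w x\<bar> \<le> \<epsilon>"
    and cont: "continuous_on UNIV wt"
    and B: "cball x e \<subseteq> cbox a b"
  shows "\<bar>integral (cbox a b) (\<lambda>v. wt v * bump x e v) - integral UNIV (bump (0::real^'n) e) * w x\<bar>
          \<le> \<epsilon> * integral UNIV (bump (0::real^'n) e)"
proof -
  let ?N = "integral UNIV (bump (0::real^'n) e)"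
  have bI: "(bump x e has_integral ?N) (cbox a b)"
    using has_integral_supp_UNIV[OF B, of "bump x e"] bump_has_integral[OF e, of x]
      bump_zero_outside'[OF e] by blast
  have wI: "(\<lambda>v. wt v * bump x e v) integrable_on cbox a b"
    by (rule integrable_continuous) (intro continuous_intros continuous_on_subset[OF cont] continuous_bump; simp)
  have "((\<lambda>v. wt v * bump x e v - w x * bump x e v) has_integral
          integral (cbox a b) (\<lambda>v. wt v * bump x e v) - w x * ?N) (cbox a b)"
    by (intro has_integral_diff has_integral_mult_right bI) (use wI in blast)
  moreover have "((\<lambda>v. \<epsilon> * bump x e v) has_integral \<epsilon> * ?N) (cbox a b)"
    by (intro has_integral_mult_right bI)
  moreover have "\<bar>wt v * bump x e v - w x * bump x e v\<bar> \<le> \<epsilon> * bump x e v" for v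
  proof (cases "v \<in> cball x e")
    case True
    have "\<bar>wt v * bump x e v - w x * bump x e v\<bar> = \<bar>wt v - w x\<bar> * bump x e v"
      using bump_nonneg[of x e v] by (simp add: left_diff_distrib[symmetric] abs_mult)
    also have "\<dots> \<le> \<epsilon> * bump x e v" using close[OF True] bump_nonneg[of x e v] by (rule mult_right_mono)
    finally show ?thesis .
  next
    case False
    then show ?thesis using bump_zero_outside'[OF e False] by simp
  qed
  ultimately have "\<bar>integral (cbox a b) (\<lambda>v. wt v * bump x e v) - w x * ?N\<bar> \<le> \<epsilon> * ?N"
    by (rule integral_bound_nonneg)
  then show ?thesis by (simp add: mult.commute)
qed

lemma lip_weak:
  fixes w :: "real^'n \<Rightarrow> real" and g :: "real^'n \<Rightarrow> real^'n"
  assumes wg: "weak_gradient_on U w g" and cw: "continuous_on U w"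
    and sub: "ball z0 R \<subseteq> U"
    and bd: "AE v in lebesgue. v \<in> ball z0 R \<longrightarrow> norm (g v) \<le> K" and K: "K \<ge> 0"
    and x: "x \<in> ball z0 R" and y: "y \<in> ball z0 R"
  shows "\<bar>w x - w y\<bar> \<le> K * norm (x - y)"
proof (rule field_le_epsilon)
  fix gap :: real assume gap: "gap > 0"
  obtain Nset where Nset: "{v \<in> space lebesgue. \<not> (v \<in> ball z0 R \<longrightarrow> norm (g v) \<le> K)} \<subseteq> Nset"
     "emeasure lebesgue Nset = 0" "Nset \<in> sets lebesgue"
    using bd by (rule AE_E)
  have Nneg: "negligible Nset" using Nset(2,3) by (simp add: negligible_iff_null_sets null_setsI)
  have bdN: "v \<in> ball z0 R \<Longrightarrow> v \<notin> Nset \<Longrightarrow> norm (g v) \<le> K" for v using Nset(1) by auto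
  define M where "M = max (dist z0 x) (dist z0 y)"
  have MR: "M < R" using x y by (auto simp: M_def)
  define R' where "R' = (M + R) / 2"
  have MR': "M < R'" "R' < R" using MR by (auto simp: R'_def)
  have wc: "continuous_on (ball z0 R) w" using continuous_on_subset[OF cw sub] .
  have ic: "isCont w p" if "p \<in> ball z0 R" for p
    using wc that continuous_on_eq_continuous_at[OF open_ball] by blast
  obtain e1 where e1: "e1 > 0" "\<And>v. dist v x < e1 \<Longrightarrow> dist (w v) (w x) < gap / 3"
    using ic[OF x] gap unfolding continuous_at_eps_delta
    by (metis divide_pos_pos zero_less_numeral)
  obtain e2 where e2: "e2 > 0" "\<And>v. dist v y < e2 \<Longrightarrow> dist (w v) (w y) < gap / 3"
    using ic[OF y] gap unfolding continuous_at_eps_delta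
    by (metis divide_pos_pos zero_less_numeral)
  define e where "e = min (min (e1/2) (e2/2)) ((R' - M) / 2)"
  have "e \<le> (R' - M) / 2" unfolding e_def by linarith
  then have e: "e > 0" "e < e1" "e < e2" "M + e < R'" using e1 e2 MR' by (auto simp: e_def)
  define d where "d = y - x"
  define z where "z s = x + s *\<^sub>R d" for s :: real
  have zM: "z s \<in> cball z0 M" if "s \<in> {0..1}" for s
  proof -
    have "x \<in> cball z0 M" "y \<in> cball z0 M" by (auto simp: M_def)
    then have "(1 - s) *\<^sub>R x + s *\<^sub>R y \<in> cball z0 M"
      using that convex_cball[of z0 M] unfolding convex_def by auto
    then show ?thesis by (simp add: z_def d_def algebra_simps)
  qed
  have zsub: "cball (z s) e \<subseteq> cball z0 R'" if "s \<in> {0..1}" for s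
  proof
    fix v assume v: "v \<in> cball (z s) e"
    have "dist z0 v \<le> dist z0 (z s) + dist (z s) v" by (rule dist_triangle)
    then show "v \<in> cball z0 R'" using zM[OF that] e(4) v by auto
  qed
  have "cball z0 R' \<subseteq> ball z0 R" using MR'(2) by auto
  then have R'U: "cball z0 R' \<subseteq> U" using sub by (rule order.trans)
  define P where "P = closest_point (cball z0 R')"
  have MRp: "R' > 0" using MR' by (smt (verit) M_def zero_le_dist)
  have Pin: "P v \<in> cball z0 R'" for v
    unfolding P_def by (rule closest_point_in_set) (use MRp in auto)
  have Pself: "v \<in> cball z0 R' \<Longrightarrow> P v = v" for v unfolding P_def by (rule closest_point_self)
  have Pc: "continuous_on UNIV P"
    unfolding P_def by (rule continuous_on_closest_point) (use MRp in auto)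
  define wt where "wt = w \<circ> P"
  have wtc: "continuous_on UNIV wt"
    unfolding wt_def by (rule continuous_on_compose[OF Pc]) (rule continuous_on_subset[OF cw], use Pin R'U in auto)
  have wtw: "v \<in> cball z0 R' \<Longrightarrow> wt v = w v" for v by (simp add: wt_def Pself)
  define a where "a = z0 - R' *\<^sub>R One"
  define b where "b = z0 + R' *\<^sub>R One"
  have B: "cball z0 R' \<subseteq> cbox a b" unfolding a_def b_def by (rule cball_sub_cbox)
  define F where "F s = integral (cbox a b) (\<lambda>v. wt v * bump (z s) e v)" for s
  define fx where "fx s v = wt v * (2 * max 0 (e\<^sup>2 - (v - z s) \<bullet> (v - z s)) * (2 * ((v - z s) \<bullet> d)))" for s v
  have Fd: "(F has_real_derivative integral (cbox a b) (fx s)) (at s)" for s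
  proof -
    have "((\<lambda>s. integral (cbox a b) (\<lambda>v. wt v * bump (z s) e v)) has_field_derivative integral (cbox a b) (fx s)) (at s within UNIV)"
    proof (rule leibniz_rule_field_derivative)
      fix s' v
      show "((\<lambda>s. wt v * bump (z s) e v) has_field_derivative fx s' v) (at s' within UNIV)"
        unfolding fx_def z_def
        by (rule DERIV_cmult) (rule bump_line_deriv)
    next
      fix s'
      show "(\<lambda>v. wt v * bump (z s') e v) integrable_on cbox a b"
        by (rule integrable_continuous) (intro continuous_intros continuous_on_subset[OF wtc] continuous_bump; simp)
    next
      show "continuous_on (UNIV \<times> cbox a b) (\<lambda>(s, v). fx s v)"
        unfolding fx_def z_def split_beta
        by (intro continuous_intros continuous_on_compose2[OF wtc]) auto
    qed auto
    then show ?thesis unfolding F_def by simp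
  qed
  have Fd_bound: "\<bar>integral (cbox a b) (fx s)\<bar> \<le> K * norm d * integral UNIV (bump (0::real^'n) e)"
    if s: "s \<in> {0..1}" for s
  proof -
    have sub2: "cball (z s) e \<subseteq> U" using zsub[OF s] R'U by auto
    have fxeq: "fx s v = - (\<Sum>i\<in>UNIV. d $ i * (w v * dbump (z s) e v $ i))" for v
    proof (cases "v \<in> ball (z s) e")
      case True
      then have "v \<in> cball (z s) e" by auto
      then have "v \<in> cball z0 R'" using zsub[OF s] by blast
      then have wtv: "wt v = w v" by (rule wtw)
      define m where "m = max 0 (e\<^sup>2 - (v - z s) \<bullet> (v - z s))"
      have fxv: "fx s v = 4 * m * w v * ((v - z s) \<bullet> d)" using wtv by (simp add: fx_def m_def)
      have db: "dbump (z s) e v $ i = -(4 * m) * (v - z s) $ i" for i by (simp add: dbump_def m_def)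
      show ?thesis unfolding fxv db inner_vec_def
        by (simp add: sum_distrib_left sum_negf mult_ac)
    next
      case False
      then show ?thesis using max_bump_zero_outside[OF e(1) False] dbump_zero_outside[OF e(1) False]
        by (simp add: fx_def)
    qed
    have supp: "fx s v = 0" if "v \<notin> cball (z s) e" for v
      using max_bump_zero_outside[OF e(1), of v "z s"] that by (auto simp: fx_def)
    have "integral U (fx s) = integral (cbox a b) (fx s)"
    proof -
      have i: "fx s integrable_on cbox a b"
        by (rule integrable_continuous) (unfold fx_def, intro continuous_intros continuous_on_subset[OF wtc]; simp)
      then have "(fx s has_integral integral (cbox a b) (fx s)) (cbox a b)" by blast
      then have "(fx s has_integral integral (cbox a b) (fx s)) UNIV"
        using has_integral_supp_UNIV[of "cball (z s) e" "cbox a b" "fx s"] zsub[OF s] B supp by blast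
      then have "(fx s has_integral integral (cbox a b) (fx s)) U"
        using has_integral_supp_UNIV[of "cball (z s) e" U "fx s"] sub2 supp by blast
      then show ?thesis by blast
    qed
    moreover have "\<bar>integral U (fx s)\<bar> \<le> K * norm d * integral UNIV (bump (0::real^'n) e)"
    proof (rule weak_grad_increment[OF wg e(1) sub2 Nneg _ K fxeq])
      fix v assume "v \<in> ball (z s) e" "v \<notin> Nset"
      moreover have "ball (z s) e \<subseteq> ball z0 R" using ball_subset_cball[of "z s" e] zsub[OF s] \<open>cball z0 R' \<subseteq> ball z0 R\<close> by (meson order.trans)
      ultimately show "norm (g v) \<le> K" using bdN by auto
    qed
    ultimately show ?thesis by simp
  qed
  obtain \<xi> where xi: "0 < \<xi>" "\<xi> < 1" "F 1 - F 0 = (1 - 0) * integral (cbox a b) (fx \<xi>)"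
    using MVT2[of 0 1 F "\<lambda>s. integral (cbox a b) (fx s)"] Fd by auto
  let ?N = "integral UNIV (bump (0::real^'n) e)"
  have Npos: "?N > 0" by (rule bump_integral_pos[OF e(1)])
  have D: "\<bar>F 1 - F 0\<bar> \<le> K * norm d * ?N" using xi Fd_bound[of \<xi>] by simp
  have A0: "\<bar>F 0 - ?N * w x\<bar> \<le> gap / 3 * ?N"
  proof -
    have "z 0 = x" by (simp add: z_def)
    moreover have c: "\<bar>wt v - w x\<bar> \<le> gap / 3" if "v \<in> cball x e" for v
    proof -
      have "v \<in> cball z0 R'" using zsub[of 0] that \<open>z 0 = x\<close> by auto
      then have "wt v = w v" by (rule wtw)
      moreover have "dist v x < e1" using that e by (auto simp: dist_commute)
      ultimately show ?thesis using e1(2)[of v] by (simp add: dist_real_def)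
    qed
    moreover have sb: "cball x e \<subseteq> cbox a b" using zsub[of 0] B \<open>z 0 = x\<close> by auto
    ultimately show ?thesis unfolding F_def using approx_by_bump[where wt=wt and w=w and \<epsilon>="gap/3", OF e(1) c wtc sb] by simp
  qed
  have A1: "\<bar>F 1 - ?N * w y\<bar> \<le> gap / 3 * ?N"
  proof -
    have "z 1 = y" by (simp add: z_def d_def)
    moreover have c: "\<bar>wt v - w y\<bar> \<le> gap / 3" if "v \<in> cball y e" for v
    proof -
      have "v \<in> cball z0 R'" using zsub[of 1] that \<open>z 1 = y\<close> by auto
      then have "wt v = w v" by (rule wtw)
      moreover have "dist v y < e2" using that e by (auto simp: dist_commute)
      ultimately show ?thesis using e2(2)[of v] by (simp add: dist_real_def)
    qed
    moreover have sb: "cball y e \<subseteq> cbox a b" using zsub[of 1] B \<open>z 1 = y\<close> by auto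
    ultimately show ?thesis unfolding F_def using approx_by_bump[where wt=wt and w=w and \<epsilon>="gap/3", OF e(1) c wtc sb] by simp
  qed
  have "?N * \<bar>w x - w y\<bar> \<le> ?N * (K * norm (x - y) + gap)"
  proof -
    have "?N * \<bar>w x - w y\<bar> = \<bar>?N * w y - ?N * w x\<bar>" using Npos by (simp add: abs_mult right_diff_distrib[symmetric] abs_minus_commute)
    also have "\<dots> \<le> \<bar>F 1 - ?N * w y\<bar> + \<bar>F 1 - F 0\<bar> + \<bar>F 0 - ?N * w x\<bar>" by linarith
    also have "\<dots> \<le> gap / 3 * ?N + K * norm d * ?N + gap / 3 * ?N" using A0 A1 D by linarith
    also have "\<dots> \<le> ?N * (K * norm (x - y) + gap)"
      using Npos gap by (simp add: d_def norm_minus_commute algebra_simps)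
    finally show ?thesis .
  qed
  then show "\<bar>w x - w y\<bar> \<le> K * norm (x - y) + gap" using Npos by simp
qed


lemma tagged_interval_real:
  assumes "p tagged_division_of {a..b::real}" "(t, K) \<in> p"
  obtains u v where "K = {u..v}" "u \<le> t" "t \<le> v" "a \<le> u" "v \<le> b"
proof -
  obtain u v where K: "K = cbox u v" using tagged_division_ofD(4)[OF assms] by blast
  have "t \<in> K" using tagged_division_ofD(2)[OF assms] .
  moreover have "K \<subseteq> {a..b}" using tagged_division_ofD(3)[OF assms] .
  ultimately show ?thesis using that[of u v] K by auto
qed

lemma dini_ftc:
  fixes F f :: "real \<Rightarrow> real"
  assumes ab: "a \<le> b"
    and AC: "AC_curve a b UNIV F"
    and Nneg: "negligible N"
    and loc: "\<And>t \<epsilon>. t \<in> {a..b} \<Longrightarrow> t \<notin> N \<Longrightarrow> \<epsilon> > 0 \<Longrightarrow>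
               \<exists>\<delta>>0. \<forall>u. \<bar>u - t\<bar> < \<delta> \<longrightarrow> \<bar>F u - F t\<bar> \<le> (f t + \<epsilon>) * \<bar>u - t\<bar>"
    and fnn: "\<And>t. t \<in> {a..b} \<Longrightarrow> f t \<ge> 0"
    and fI: "(f has_integral I) {a..b}"
  shows "F b - F a \<le> I"
proof (rule field_le_epsilon)
  fix \<epsilon>' :: real assume \<epsilon>': "\<epsilon>' > 0"
  define \<epsilon> where "\<epsilon> = \<epsilon>' / 3"
  have \<epsilon>: "\<epsilon> > 0" using \<epsilon>' by (simp add: \<epsilon>_def)
  define \<epsilon>0 where "\<epsilon>0 = \<epsilon> / (b - a + 1)"
  have \<epsilon>0: "\<epsilon>0 > 0" "\<epsilon>0 * (b - a) \<le> \<epsilon>" using \<epsilon> ab by (auto simp: \<epsilon>0_def field_simps)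
  obtain \<delta>AC where \<delta>AC: "\<delta>AC > 0"
    "\<And>D. finite D \<Longrightarrow> (\<forall>(s,t)\<in>D. a \<le> s \<and> s < t \<and> t \<le> b) \<Longrightarrow>
        pairwise (\<lambda>(s,t) (s',t'). {s<..<t} \<inter> {s'<..<t'} = {}) D \<Longrightarrow>
        (\<Sum>(s,t)\<in>D. t - s) < \<delta>AC \<Longrightarrow> (\<Sum>(s,t)\<in>D. norm (F t - F s)) < \<epsilon>"
    using AC \<epsilon> unfolding AC_curve_def by meson
  obtain \<gamma>1 where \<gamma>1: "gauge \<gamma>1" "\<And>p. p tagged_division_of {a..b} \<Longrightarrow> \<gamma>1 fine p \<Longrightarrow>
      norm ((\<Sum>(x, k)\<in>p. measure lborel k *\<^sub>R f x) - I) < \<epsilon>"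
    using fI \<epsilon> unfolding has_integral_real by meson
  have "(indicator N has_integral (0::real)) {a..b}"
    using Nneg unfolding negligible_def by (metis box_real(2))
  then obtain \<gamma>2 where \<gamma>2: "gauge \<gamma>2" "\<And>p. p tagged_division_of {a..b} \<Longrightarrow> \<gamma>2 fine p \<Longrightarrow>
      norm ((\<Sum>(x, k)\<in>p. measure lborel k *\<^sub>R (indicator N x :: real)) - 0) < \<delta>AC"
    using \<delta>AC(1) unfolding has_integral_real by meson
  have "\<forall>t. \<exists>d. t \<in> {a..b} \<and> t \<notin> N \<longrightarrow> d > 0 \<and> (\<forall>u. \<bar>u - t\<bar> < d \<longrightarrow> \<bar>F u - F t\<bar> \<le> (f t + \<epsilon>0) * \<bar>u - t\<bar>)"
    using loc \<epsilon>0(1) by blast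
  then obtain del where del: "\<And>t. t \<in> {a..b} \<Longrightarrow> t \<notin> N \<Longrightarrow> del t > 0 \<and>
      (\<forall>u. \<bar>u - t\<bar> < del t \<longrightarrow> \<bar>F u - F t\<bar> \<le> (f t + \<epsilon>0) * \<bar>u - t\<bar>)"
    by metis
  define \<gamma>3 where "\<gamma>3 t = ball t (if t \<in> {a..b} \<and> t \<notin> N then del t else 1)" for t
  have \<gamma>3: "gauge \<gamma>3" unfolding gauge_def \<gamma>3_def using del by auto
  obtain p where p: "p tagged_division_of {a..b}" "(\<lambda>x. \<gamma>1 x \<inter> (\<lambda>x. \<gamma>2 x \<inter> \<gamma>3 x) x) fine p"
    using fine_division_exists[OF gauge_Int[OF \<gamma>1(1) gauge_Int[OF \<gamma>2(1) \<gamma>3]], of a b] by (metis box_real(2))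
  have fine: "\<gamma>1 fine p" "\<gamma>2 fine p" "\<gamma>3 fine p" using p(2) by (auto simp: fine_Int)
  have finp: "finite p" using p(1) by blast
  define dF where "dF = (\<lambda>(t::real, K::real set). F (Sup K) - F (Inf K))"
  have tot: "(\<Sum>q\<in>p. dF q) = F b - F a"
    unfolding dF_def using additive_tagged_division_1[OF ab p(1), of F] by simp
  define pN where "pN = {q \<in> p. fst q \<in> N}"
  define pG where "pG = {q \<in> p. fst q \<notin> N}"
  have split: "(\<Sum>q\<in>p. dF q) = (\<Sum>q\<in>pG. dF q) + (\<Sum>q\<in>pN. dF q)"
  proof -
    have "p = pG \<union> pN" "pG \<inter> pN = {}" by (auto simp: pG_def pN_def)
    moreover have "finite pG" "finite pN" using finp by (auto simp: pG_def pN_def)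
    ultimately show ?thesis by (metis sum.union_disjoint)
  qed
  have good: "dF q \<le> (case q of (t, K) \<Rightarrow> measure lborel K * f t) + \<epsilon>0 * (case q of (t, K) \<Rightarrow> measure lborel K)"
    if q: "q \<in> pG" for q
  proof -
    obtain t K where tK: "q = (t, K)" by (cases q)
    have tKp: "(t, K) \<in> p" and tN: "t \<notin> N" using q tK by (auto simp: pG_def)
    obtain u v where uv: "K = {u..v}" "u \<le> t" "t \<le> v" "a \<le> u" "v \<le> b"
      using tagged_interval_real[OF p(1) tKp] by blast
    have tab: "t \<in> {a..b}" using uv by auto
    have "K \<subseteq> \<gamma>3 t" using fine(3) tKp unfolding fine_def by blast
    then have Ksub: "K \<subseteq> ball t (del t)" using tab tN unfolding \<gamma>3_def by simp
    have d: "\<forall>u'. \<bar>u' - t\<bar> < del t \<longrightarrow> \<bar>F u' - F t\<bar> \<le> (f t + \<epsilon>0) * \<bar>u' - t\<bar>"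
      using del[OF tab tN] by blast
    have "u \<in> K" "v \<in> K" using uv by auto
    then have "\<bar>u - t\<bar> < del t" "\<bar>v - t\<bar> < del t" using Ksub by (auto simp: dist_real_def)
    then have "\<bar>F u - F t\<bar> \<le> (f t + \<epsilon>0) * \<bar>u - t\<bar>" "\<bar>F v - F t\<bar> \<le> (f t + \<epsilon>0) * \<bar>v - t\<bar>"
      using d by auto
    moreover have "\<bar>u - t\<bar> = t - u" "\<bar>v - t\<bar> = v - t" using uv by auto
    ultimately have "\<bar>F u - F t\<bar> \<le> (f t + \<epsilon>0) * (t - u)" "\<bar>F v - F t\<bar> \<le> (f t + \<epsilon>0) * (v - t)"
      by auto
    then have "F v - F u \<le> (f t + \<epsilon>0) * (v - u)" by (simp add: algebra_simps abs_le_iff)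
    moreover have "Sup K = v" "Inf K = u" "measure lborel K = v - u" using uv by auto
    moreover have "(f t + \<epsilon>0) * (v - u) = (v - u) * f t + \<epsilon>0 * (v - u)" by (simp add: algebra_simps)
    ultimately show ?thesis by (simp add: tK dF_def)
  qed
  have sumG: "(\<Sum>q\<in>pG. dF q) \<le> (\<Sum>(t, K)\<in>p. measure lborel K * f t) + \<epsilon>0 * (b - a)"
  proof -
    have "(\<Sum>q\<in>pG. dF q) \<le> (\<Sum>q\<in>pG. (case q of (t, K) \<Rightarrow> measure lborel K * f t) + \<epsilon>0 * (case q of (t, K) \<Rightarrow> measure lborel K))"
      by (rule sum_mono) (rule good)
    also have "\<dots> = (\<Sum>q\<in>pG. (case q of (t, K) \<Rightarrow> measure lborel K * f t)) + \<epsilon>0 * (\<Sum>q\<in>pG. (case q of (t, K) \<Rightarrow> measure lborel K))"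
      by (simp add: sum.distrib sum_distrib_left)
    also have "(\<Sum>q\<in>pG. (case q of (t, K) \<Rightarrow> measure lborel K * f t)) \<le> (\<Sum>(t, K)\<in>p. measure lborel K * f t)"
    proof (rule sum_mono2[OF finp])
      show "pG \<subseteq> p" by (auto simp: pG_def)
      fix q assume "q \<in> p - pG"
      then obtain t K where "q = (t, K)" "(t, K) \<in> p" by (cases q) auto
      moreover obtain u v where "K = {u..v}" "u \<le> t" "t \<le> v" "a \<le> u" "v \<le> b"
        using tagged_interval_real[OF p(1) \<open>(t, K) \<in> p\<close>] by blast
      ultimately show "0 \<le> (case q of (t, K) \<Rightarrow> measure lborel K * f t)" using fnn[of t] by auto
    qed
    also have "(\<Sum>q\<in>pG. (case q of (t, K) \<Rightarrow> measure lborel K)) \<le> (\<Sum>(t, K)\<in>p. measure lborel K)"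
      by (rule sum_mono2[OF finp]) (auto simp: pG_def split: prod.splits)
    also have "(\<Sum>(t, K)\<in>p. measure lborel K) = b - a"
      using additive_content_tagged_division[of p a b] p(1) ab by (simp add: box_real)
    finally show ?thesis using \<epsilon>0 by (simp add: mult_left_mono)
  qed
  have elt: "\<exists>u v. K = {u..v} \<and> u \<le> t \<and> t \<le> v \<and> a \<le> u \<and> v \<le> b \<and> Inf K = u \<and> Sup K = v \<and> measure lborel K = v - u"
    if m: "(t, K) \<in> p" for t K
  proof -
    obtain u v where "K = {u..v}" "u \<le> t" "t \<le> v" "a \<le> u" "v \<le> b"
      using tagged_interval_real[OF p(1) m] by blast
    then show ?thesis by (intro exI[of _ u] exI[of _ v]) auto
  qed
  have disj: "interior K1 \<inter> interior K2 = {}" if "(t1, K1) \<in> p" "(t2, K2) \<in> p" "(t1, K1) \<noteq> (t2, K2)" for t1 K1 t2 K2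
    using tagged_division_ofD(5)[OF p(1) that] .
  define pN' where "pN' = {q \<in> pN. Inf (snd q) < Sup (snd q)}"
  have finN: "finite pN" "finite pN'" using finp by (auto simp: pN_def pN'_def)
  have s1: "(\<Sum>q\<in>pN. dF q) = (\<Sum>q\<in>pN'. dF q)"
  proof (rule sum.mono_neutral_right[OF finN(1)])
    show "pN' \<subseteq> pN" by (auto simp: pN'_def)
    show "\<forall>i\<in>pN - pN'. dF i = 0"
    proof
      fix q assume q: "q \<in> pN - pN'"
      obtain t K where tK: "q = (t, K)" by (cases q)
      then have "(t, K) \<in> p" using q by (auto simp: pN_def)
      then obtain u v where "K = {u..v}" "u \<le> v" "Inf K = u" "Sup K = v" using elt by force
      then have "Inf K = Sup K" using q tK by (auto simp: pN'_def)
      then show "dF q = 0" by (simp add: tK dF_def)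
    qed
  qed
  define h where "h q = (Inf (snd q), Sup (snd q))" for q :: "real \<times> real set"
  define D where "D = h ` pN'"
  have inj: "inj_on h pN'"
  proof (rule inj_onI)
    fix q1 q2 assume q1: "q1 \<in> pN'" and q2: "q2 \<in> pN'" and hh: "h q1 = h q2"
    show "q1 = q2"
    proof (rule ccontr)
      assume ne: "q1 \<noteq> q2"
      obtain t1 K1 where tK1: "q1 = (t1, K1)" by (cases q1)
      obtain t2 K2 where tK2: "q2 = (t2, K2)" by (cases q2)
      have m1: "(t1, K1) \<in> p" "(t2, K2) \<in> p" using q1 q2 tK1 tK2 by (auto simp: pN'_def pN_def)
      obtain u1 v1 where e1: "K1 = {u1..v1}" "Inf K1 = u1" "Sup K1 = v1" using elt[OF m1(1)] by blast
      obtain u2 v2 where e2: "K2 = {u2..v2}" "Inf K2 = u2" "Sup K2 = v2" using elt[OF m1(2)] by blast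
      have "u1 < v1" using q1 tK1 e1 by (auto simp: pN'_def)
      moreover have "u1 = u2" "v1 = v2" using hh tK1 tK2 e1 e2 by (auto simp: h_def)
      moreover have "interior K1 \<inter> interior K2 = {}" using disj[OF m1] ne tK1 tK2 by auto
      ultimately show False using e1 e2 by (auto dest: dense)
    qed
  qed
  have Dprop: "\<forall>(s, t)\<in>D. a \<le> s \<and> s < t \<and> t \<le> b"
  proof
    fix st assume "st \<in> D"
    then obtain q where q: "q \<in> pN'" "st = h q" by (auto simp: D_def)
    obtain t K where tK: "q = (t, K)" by (cases q)
    have m: "(t, K) \<in> p" using q tK by (auto simp: pN'_def pN_def)
    obtain u v where "K = {u..v}" "u \<le> t" "t \<le> v" "a \<le> u" "v \<le> b" "Inf K = u" "Sup K = v" using elt[OF m] by blast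
    moreover have "Inf K < Sup K" using q tK by (auto simp: pN'_def)
    ultimately show "case st of (s, t) \<Rightarrow> a \<le> s \<and> s < t \<and> t \<le> b" using q tK by (auto simp: h_def)
  qed
  have Dpw: "pairwise (\<lambda>(s,t) (s',t'). {s<..<t} \<inter> {s'<..<t'} = {}) D"
    unfolding pairwise_def
  proof (intro ballI impI)
    fix st1 st2 assume "st1 \<in> D" "st2 \<in> D" "st1 \<noteq> st2"
    then obtain q1 q2 where q: "q1 \<in> pN'" "q2 \<in> pN'" "st1 = h q1" "st2 = h q2" "q1 \<noteq> q2"
      by (auto simp: D_def)
    obtain t1 K1 where tK1: "q1 = (t1, K1)" by (cases q1)
    obtain t2 K2 where tK2: "q2 = (t2, K2)" by (cases q2)
    have m1: "(t1, K1) \<in> p" "(t2, K2) \<in> p" using q tK1 tK2 by (auto simp: pN'_def pN_def)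
    obtain u1 v1 where e1: "K1 = {u1..v1}" "Inf K1 = u1" "Sup K1 = v1" using elt[OF m1(1)] by blast
    obtain u2 v2 where e2: "K2 = {u2..v2}" "Inf K2 = u2" "Sup K2 = v2" using elt[OF m1(2)] by blast
    have "interior K1 \<inter> interior K2 = {}" using disj[OF m1] q(5) tK1 tK2 by auto
    then show "(\<lambda>(s,t) (s',t'). {s<..<t} \<inter> {s'<..<t'} = {}) st1 st2"
      using q tK1 tK2 e1 e2 by (auto simp: h_def)
  qed
  have sumD: "(\<Sum>(s, t)\<in>D. t - s) = (\<Sum>q\<in>pN'. (case q of (t, K) \<Rightarrow> measure lborel K))"
  proof -
    have "(\<Sum>(s, t)\<in>D. t - s) = (\<Sum>q\<in>pN'. (case h q of (s, t) \<Rightarrow> t - s))"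
      unfolding D_def by (subst sum.reindex[OF inj]) (simp add: o_def)
    also have "\<dots> = (\<Sum>q\<in>pN'. (case q of (t, K) \<Rightarrow> measure lborel K))"
    proof (rule sum.cong[OF refl])
      fix q assume q: "q \<in> pN'"
      obtain t K where tK: "q = (t, K)" by (cases q)
      have m: "(t, K) \<in> p" using q tK by (auto simp: pN'_def pN_def)
      obtain u v where "Inf K = u" "Sup K = v" "measure lborel K = v - u" using elt[OF m] by blast
      then show "(case h q of (s, t) \<Rightarrow> t - s) = (case q of (t, K) \<Rightarrow> measure lborel K)"
        by (simp add: tK h_def)
    qed
    finally show ?thesis .
  qed
  have "(\<Sum>q\<in>pN'. (case q of (t, K) \<Rightarrow> measure lborel K)) \<le> (\<Sum>q\<in>pN. (case q of (t, K) \<Rightarrow> measure lborel K))"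
    by (rule sum_mono2[OF finN(1)]) (auto simp: pN'_def split: prod.splits)
  also have "(\<Sum>q\<in>pN. (case q of (t, K) \<Rightarrow> measure lborel K)) = (\<Sum>(x, k)\<in>p. measure lborel k *\<^sub>R (indicator N x :: real))"
  proof -
    have "(\<Sum>(x, k)\<in>p. measure lborel k *\<^sub>R (indicator N x :: real)) = (\<Sum>q\<in>pN. (case q of (x, k) \<Rightarrow> measure lborel k *\<^sub>R (indicator N x :: real)))"
      by (rule sum.mono_neutral_right[OF finp]) (auto simp: pN_def indicator_def)
    also have "\<dots> = (\<Sum>q\<in>pN. (case q of (t, K) \<Rightarrow> measure lborel K))"
      by (rule sum.cong) (auto simp: pN_def indicator_def)
    finally show ?thesis by simp
  qed
  also have "\<dots> < \<delta>AC" using \<gamma>2(2)[OF p(1) fine(2)] by simp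
  finally have lenD: "(\<Sum>(s, t)\<in>D. t - s) < \<delta>AC" using sumD by simp
  have finD: "finite D" using finN by (simp add: D_def)
  have "(\<Sum>(s, t)\<in>D. norm (F t - F s)) < \<epsilon>" by (rule \<delta>AC(2)[OF finD Dprop Dpw lenD])
  moreover have "(\<Sum>q\<in>pN'. dF q) = (\<Sum>(s, t)\<in>D. F t - F s)"
  proof -
    have "(\<Sum>(s, t)\<in>D. F t - F s) = (\<Sum>q\<in>pN'. (case h q of (s, t) \<Rightarrow> F t - F s))"
      unfolding D_def by (subst sum.reindex[OF inj]) (simp add: o_def)
    also have "\<dots> = (\<Sum>q\<in>pN'. dF q)"
      by (rule sum.cong) (auto simp: h_def dF_def split: prod.splits)
    finally show ?thesis by simp
  qed
  moreover have "(\<Sum>(s, t)\<in>D. F t - F s) \<le> (\<Sum>(s, t)\<in>D. norm (F t - F s))"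
    by (rule sum_mono) auto
  ultimately have sumN: "(\<Sum>q\<in>pN. dF q) < \<epsilon>" using s1 by simp
  have "(\<Sum>(t, K)\<in>p. measure lborel K * f t) < I + \<epsilon>"
    using \<gamma>1(2)[OF p(1) fine(1)] by (simp add: abs_less_iff)
  then show "F b - F a \<le> I + \<epsilon>'"
    using tot split sumG sumN \<epsilon>0 by (simp add: \<epsilon>_def)
qed


lemma V_le_c:
  fixes U :: "(real^'n) set" and V :: "real^'n \<Rightarrow> real" and g :: "real^'n \<Rightarrow> real^'n"
  assumes U: "open U" and Vc: "continuous_on UNIV V"
    and ae: "AE x in lebesgue. x \<in> U \<longrightarrow> (1/2) * (norm (g x))\<^sup>2 + V x \<le> c"
    and x: "x \<in> U"
  shows "V x \<le> c"
proof (rule ccontr)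
  assume "\<not> V x \<le> c"
  then have Vx: "V x > c" by simp
  obtain N where N: "{v \<in> space lebesgue. \<not> (v \<in> U \<longrightarrow> (1/2) * (norm (g v))\<^sup>2 + V v \<le> c)} \<subseteq> N"
     "emeasure lebesgue N = 0" "N \<in> sets lebesgue"
    using ae by (rule AE_E)
  have Nneg: "negligible N" using N(2,3) by (simp add: negligible_iff_null_sets null_setsI)
  have "open (U \<inter> {v. V v > c})"
    using U Vc by (intro open_Int) (auto intro: open_Collect_less continuous_on_const)
  moreover have "x \<in> U \<inter> {v. V v > c}" using x Vx by auto
  moreover have "U \<inter> {v. V v > c} \<subseteq> N"
  proof
    fix v assume v: "v \<in> U \<inter> {v. V v > c}"
    have nn: "(norm (g v))\<^sup>2 \<ge> 0" by simp
    have "V v > c" using v by simp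
    then have "\<not> ((1/2) * (norm (g v))\<^sup>2 + V v \<le> c)" using nn by linarith
    then show "v \<in> N" using N(1) v by auto
  qed
  ultimately show False using open_not_negligible negligible_subset[OF Nneg] by blast
qed

lemma g_le_k:
  fixes U :: "(real^'n) set" and V :: "real^'n \<Rightarrow> real" and g :: "real^'n \<Rightarrow> real^'n"
  assumes ae: "AE x in lebesgue. x \<in> U \<longrightarrow> (1/2) * (norm (g x))\<^sup>2 + V x \<le> c"
  shows "AE x in lebesgue. x \<in> U \<longrightarrow> norm (g x) \<le> sqrt (2 * max 0 (c - V x))"
  using ae
proof eventually_elim
  case (elim x)
  show ?case
  proof
    assume "x \<in> U"
    then have h: "(1/2) * (norm (g x))\<^sup>2 + V x \<le> c" using elim by auto
    have nn: "(norm (g x))\<^sup>2 \<ge> 0" by simp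
    have "c - V x \<ge> 0" using h nn by linarith
    then have "max 0 (c - V x) = c - V x" by simp
    then have "(norm (g x))\<^sup>2 \<le> 2 * max 0 (c - V x)" using h by simp
    then show "norm (g x) \<le> sqrt (2 * max 0 (c - V x))" by (simp add: real_le_rsqrt)
  qed
qed

lemma local_lip:
  fixes w :: "real^'n \<Rightarrow> real" and g :: "real^'n \<Rightarrow> real^'n" and k :: "real^'n \<Rightarrow> real"
  assumes W: "W1inf_grad U w g" and U: "open U" and kc: "continuous_on UNIV k"
    and bd: "AE v in lebesgue. v \<in> U \<longrightarrow> norm (g v) \<le> k v" and knn: "\<And>v. k v \<ge> 0"
    and x: "x \<in> U" and \<epsilon>: "\<epsilon> > 0"
  shows "\<exists>r>0. ball x r \<subseteq> U \<and> (\<forall>y\<in>ball x r. \<forall>z\<in>ball x r. \<bar>w y - w z\<bar> \<le> (k x + \<epsilon>) * norm (y - z))"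
proof -
  obtain r1 where r1: "r1 > 0" "ball x r1 \<subseteq> U" using U x open_contains_ball by blast
  have "isCont k x" using kc by (simp add: continuous_on_eq_continuous_at)
  then obtain r2 where r2: "r2 > 0" "\<And>v. dist v x < r2 \<Longrightarrow> dist (k v) (k x) < \<epsilon>"
    using \<epsilon> unfolding continuous_at_eps_delta by blast
  define r where "r = min r1 r2"
  have r: "r > 0" "ball x r \<subseteq> U" using r1 r2 by (auto simp: r_def)
  have wg: "weak_gradient_on U w g" and cw: "continuous_on U w" using W by (auto simp: W1inf_grad_def)
  have bd': "AE v in lebesgue. v \<in> ball x r \<longrightarrow> norm (g v) \<le> k x + \<epsilon>"
    using bd
  proof eventually_elim
    case (elim v)
    show ?case
    proof
      assume v: "v \<in> ball x r"
      then have "v \<in> U" using r by auto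
      then have "norm (g v) \<le> k v" using elim by auto
      moreover have "dist v x < r2" using v by (auto simp: r_def dist_commute)
      then have "k v < k x + \<epsilon>" using r2(2)[of v] by (auto simp: dist_real_def)
      ultimately show "norm (g v) \<le> k x + \<epsilon>" by simp
    qed
  qed
  have "\<forall>y\<in>ball x r. \<forall>z\<in>ball x r. \<bar>w y - w z\<bar> \<le> (k x + \<epsilon>) * norm (y - z)"
    using lip_weak[OF wg cw r(2) bd'] knn[of x] \<epsilon> by auto
  then show ?thesis using r by blast
qed

lemma has_integral_nonneg_zero_AE:
  fixes f :: "'a::euclidean_space \<Rightarrow> real"
  assumes int: "(f has_integral 0) S" and nonneg: "\<And>x. x \<in> S \<Longrightarrow> f x \<ge> 0"
  shows "AE x in lebesgue. x \<in> S \<longrightarrow> f x = 0"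
proof -
  note intl = has_integral_integrable[OF int]
  have af: "f absolutely_integrable_on S"
    using nonneg by (intro absolutely_integrable_onI intl integrable_eq[OF intl]) simp
  then have "integral S f = set_lebesgue_integral lebesgue S f"
    by (intro set_lebesgue_integral_eq_integral(2)[symmetric])
  then have "set_lebesgue_integral lebesgue S f = 0" using int by (simp add: integral_unique)
  then have "(AE x in lebesgue. indicator S x *\<^sub>R f x = 0)"
    unfolding set_lebesgue_integral_def
    by (subst (asm) integral_nonneg_eq_0_iff_AE) (use af nonneg in \<open>auto simp: set_integrable_def indicator_def\<close>)
  then show ?thesis by eventually_elim (auto simp: indicator_def)
qed


lemma AC_sub:
  assumes "AC_curve a b U \<eta>" "a \<le> s" "t \<le> b"
  shows "AC_curve s t UNIV \<eta>"
  unfolding AC_curve_def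
proof (intro conjI allI impI)
  fix \<epsilon> :: real assume "\<epsilon> > 0"
  then obtain \<delta> where \<delta>: "\<delta> > 0" "\<forall>D. finite D \<and> (\<forall>(s,t)\<in>D. a \<le> s \<and> s < t \<and> t \<le> b) \<and>
        pairwise (\<lambda>(s,t) (s',t'). {s<..<t} \<inter> {s'<..<t'} = {}) D \<and>
        (\<Sum>(s,t)\<in>D. t - s) < \<delta> \<longrightarrow> (\<Sum>(s,t)\<in>D. norm (\<eta> t - \<eta> s)) < \<epsilon>"
    using assms(1) unfolding AC_curve_def by meson
  show "\<exists>\<delta>>0. \<forall>D. finite D \<and> (\<forall>(s',t')\<in>D. s \<le> s' \<and> s' < t' \<and> t' \<le> t) \<and>
        pairwise (\<lambda>(s,t) (s',t'). {s<..<t} \<inter> {s'<..<t'} = {}) D \<and>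
        (\<Sum>(s,t)\<in>D. t - s) < \<delta> \<longrightarrow> (\<Sum>(s,t)\<in>D. norm (\<eta> t - \<eta> s)) < \<epsilon>"
  proof (intro exI[of _ \<delta>] conjI allI impI)
    fix D :: "(real \<times> real) set"
    assume D: "finite D \<and> (\<forall>(s',t')\<in>D. s \<le> s' \<and> s' < t' \<and> t' \<le> t) \<and>
        pairwise (\<lambda>(s,t) (s',t'). {s<..<t} \<inter> {s'<..<t'} = {}) D \<and> (\<Sum>(s,t)\<in>D. t - s) < \<delta>"
    then have "\<forall>(s',t')\<in>D. a \<le> s' \<and> s' < t' \<and> t' \<le> b" using assms(2,3) by auto
    then show "(\<Sum>(s,t)\<in>D. norm (\<eta> t - \<eta> s)) < \<epsilon>" using \<delta>(2) D by blast
  qed (use \<delta> in auto)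
qed auto

lemma AC_cont:
  assumes AC: "AC_curve a b U \<eta>"
  shows "continuous_on {a..b} \<eta>"
  unfolding continuous_on_iff
proof (intro ballI allI impI)
  fix x \<epsilon> :: real assume x: "x \<in> {a..b}" and \<epsilon>: "\<epsilon> > 0"
  obtain \<delta> where \<delta>: "\<delta> > 0" "\<And>D. finite D \<Longrightarrow> (\<forall>(s,t)\<in>D. a \<le> s \<and> s < t \<and> t \<le> b) \<Longrightarrow>
        pairwise (\<lambda>(s,t) (s',t'). {s<..<t} \<inter> {s'<..<t'} = {}) D \<Longrightarrow>
        (\<Sum>(s,t)\<in>D. t - s) < \<delta> \<Longrightarrow> (\<Sum>(s,t)\<in>D. norm (\<eta> t - \<eta> s)) < \<epsilon>"
    using AC \<epsilon> unfolding AC_curve_def by meson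
  show "\<exists>d>0. \<forall>x'\<in>{a..b}. dist x' x < d \<longrightarrow> dist (\<eta> x') (\<eta> x) < \<epsilon>"
  proof (intro exI[of _ \<delta>] conjI ballI impI)
    fix y assume y: "y \<in> {a..b}" "dist y x < \<delta>"
    show "dist (\<eta> y) (\<eta> x) < \<epsilon>"
    proof (cases "y = x")
      case True then show ?thesis using \<epsilon> by simp
    next
      case False
      define D where "D = {(min x y, max x y)}"
      have "(\<Sum>(s,t)\<in>D. norm (\<eta> t - \<eta> s)) < \<epsilon>"
        by (rule \<delta>(2)) (use x y False in \<open>auto simp: D_def pairwise_def dist_real_def min_def max_def\<close>)
      then show ?thesis
        by (cases "x \<le> y") (auto simp: D_def min_def max_def dist_norm norm_minus_commute)
    qed
  qed (use \<delta> in auto)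
qed

lemma AC_comp_lip:
  fixes \<eta> :: "real \<Rightarrow> 'a::real_normed_vector" and \<phi> :: "'a \<Rightarrow> real"
  assumes AC: "AC_curve a b U \<eta>" and r: "r > 0" and L: "L \<ge> 0"
    and lip: "\<And>x y z. x \<in> \<eta> ` {a..b} \<Longrightarrow> y \<in> ball x r \<Longrightarrow> z \<in> ball x r \<Longrightarrow> \<bar>\<phi> y - \<phi> z\<bar> \<le> L * norm (y - z)"
  shows "AC_curve a b UNIV (\<phi> \<circ> \<eta>)"
  unfolding AC_curve_def
proof (intro conjI allI impI)
  fix \<epsilon> :: real assume \<epsilon>: "\<epsilon> > 0"
  define \<epsilon>' where "\<epsilon>' = min r (\<epsilon> / (L + 1))"
  have \<epsilon>': "\<epsilon>' > 0" "\<epsilon>' \<le> r" "L * \<epsilon>' < \<epsilon>"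
  proof -
    show "\<epsilon>' > 0" "\<epsilon>' \<le> r" using r \<epsilon> L by (auto simp: \<epsilon>'_def)
    have "L * \<epsilon>' \<le> L * (\<epsilon> / (L + 1))" using L by (intro mult_left_mono) (auto simp: \<epsilon>'_def)
    also have "\<dots> < \<epsilon>" using L \<epsilon> by (simp add: field_simps)
    finally show "L * \<epsilon>' < \<epsilon>" .
  qed
  obtain \<delta> where \<delta>: "\<delta> > 0" "\<And>D. finite D \<Longrightarrow> (\<forall>(s,t)\<in>D. a \<le> s \<and> s < t \<and> t \<le> b) \<Longrightarrow>
        pairwise (\<lambda>(s,t) (s',t'). {s<..<t} \<inter> {s'<..<t'} = {}) D \<Longrightarrow>
        (\<Sum>(s,t)\<in>D. t - s) < \<delta> \<Longrightarrow> (\<Sum>(s,t)\<in>D. norm (\<eta> t - \<eta> s)) < \<epsilon>'"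
    using AC \<epsilon>'(1) unfolding AC_curve_def by meson
  show "\<exists>\<delta>>0. \<forall>D. finite D \<and> (\<forall>(s,t)\<in>D. a \<le> s \<and> s < t \<and> t \<le> b) \<and>
        pairwise (\<lambda>(s,t) (s',t'). {s<..<t} \<inter> {s'<..<t'} = {}) D \<and>
        (\<Sum>(s,t)\<in>D. t - s) < \<delta> \<longrightarrow> (\<Sum>(s,t)\<in>D. norm ((\<phi> \<circ> \<eta>) t - (\<phi> \<circ> \<eta>) s)) < \<epsilon>"
  proof (intro exI[of _ \<delta>] conjI allI impI)
    fix D :: "(real \<times> real) set"
    assume D: "finite D \<and> (\<forall>(s,t)\<in>D. a \<le> s \<and> s < t \<and> t \<le> b) \<and>
        pairwise (\<lambda>(s,t) (s',t'). {s<..<t} \<inter> {s'<..<t'} = {}) D \<and> (\<Sum>(s,t)\<in>D. t - s) < \<delta>"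
    then have S: "(\<Sum>(s,t)\<in>D. norm (\<eta> t - \<eta> s)) < \<epsilon>'" using \<delta>(2) by blast
    have each: "\<bar>\<phi> (\<eta> t) - \<phi> (\<eta> s)\<bar> \<le> L * norm (\<eta> t - \<eta> s)" if st: "(s, t) \<in> D" for s t
    proof -
      have "norm (\<eta> t - \<eta> s) \<le> (\<Sum>(s,t)\<in>D. norm (\<eta> t - \<eta> s))"
        using member_le_sum[of "(s,t)" D "\<lambda>(s,t). norm (\<eta> t - \<eta> s)"] st D by auto
      then have "norm (\<eta> t - \<eta> s) < r" using S \<epsilon>'(2) by linarith
      moreover have "\<eta> s \<in> \<eta> ` {a..b}" using st D by auto
      ultimately show ?thesis using lip[of "\<eta> s" "\<eta> t" "\<eta> s"] r by (auto simp: dist_norm norm_minus_commute)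
    qed
    have "(\<Sum>(s,t)\<in>D. norm ((\<phi> \<circ> \<eta>) t - (\<phi> \<circ> \<eta>) s)) \<le> (\<Sum>(s,t)\<in>D. L * norm (\<eta> t - \<eta> s))"
      by (rule sum_mono) (use each in auto)
    also have "\<dots> = L * (\<Sum>(s,t)\<in>D. norm (\<eta> t - \<eta> s))" by (simp add: sum_distrib_left case_prod_unfold)
    also have "\<dots> \<le> L * \<epsilon>'" using S L by (intro mult_left_mono) auto
    finally show "(\<Sum>(s,t)\<in>D. norm ((\<phi> \<circ> \<eta>) t - (\<phi> \<circ> \<eta>) s)) < \<epsilon>" using \<epsilon>'(3) by linarith
  qed (use \<delta> in auto)
qed auto

lemma dini_curve:
  fixes \<eta> :: "real \<Rightarrow> 'a::real_normed_vector" and \<phi> :: "'a \<Rightarrow> real"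
  assumes st: "s \<le> t" and AC: "AC_curve s t UNIV (\<phi> \<circ> \<eta>)" and N: "negligible N"
    and der: "\<And>r. r \<in> {s..t} \<Longrightarrow> r \<notin> N \<Longrightarrow> (\<eta> has_vector_derivative \<eta>' r) (at r)"
    and lip: "\<And>r \<epsilon>. r \<in> {s..t} \<Longrightarrow> r \<notin> N \<Longrightarrow> \<epsilon> > 0 \<Longrightarrow>
        \<exists>\<rho>>0. \<forall>y\<in>ball (\<eta> r) \<rho>. \<forall>z\<in>ball (\<eta> r) \<rho>. \<bar>\<phi> y - \<phi> z\<bar> \<le> (\<kappa> r + \<epsilon>) * norm (y - z)"
    and \<kappa>: "\<And>r. r \<in> {s..t} \<Longrightarrow> \<kappa> r \<ge> 0"
    and I: "((\<lambda>r. \<kappa> r * norm (\<eta>' r)) has_integral I) {s..t}"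
  shows "\<phi> (\<eta> t) - \<phi> (\<eta> s) \<le> I"
proof -
  have "(\<phi> \<circ> \<eta>) t - (\<phi> \<circ> \<eta>) s \<le> I"
  proof (rule dini_ftc[OF st AC N _ _ I])
    fix r assume "r \<in> {s..t}" then show "\<kappa> r * norm (\<eta>' r) \<ge> 0" using \<kappa> by simp
  next
    fix r \<epsilon> :: real assume r: "r \<in> {s..t}" "r \<notin> N" and \<epsilon>: "\<epsilon> > 0"
    define \<kappa>0 where "\<kappa>0 = \<kappa> r"
    define n0 where "n0 = norm (\<eta>' r)"
    have k0: "\<kappa>0 \<ge> 0" using \<kappa> r by (simp add: \<kappa>0_def)
    have n0: "n0 \<ge> 0" by (simp add: n0_def)
    define \<epsilon>1 where "\<epsilon>1 = min 1 (\<epsilon> / (\<kappa>0 + n0 + 1))"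
    have e1a: "\<epsilon>1 > 0" "\<epsilon>1 \<le> 1"
      using \<epsilon> k0 n0 by (auto simp: \<epsilon>1_def)
    have "\<epsilon>1 * (\<kappa>0 + n0 + 1) \<le> \<epsilon> / (\<kappa>0 + n0 + 1) * (\<kappa>0 + n0 + 1)"
      using k0 n0 by (intro mult_right_mono) (auto simp: \<epsilon>1_def)
    also have "\<dots> = \<epsilon>" using k0 n0 by simp
    finally have e1: "\<epsilon>1 > 0" "\<epsilon>1 \<le> 1" "\<epsilon>1 * (\<kappa>0 + n0 + 1) \<le> \<epsilon>" using e1a by auto
    have prod: "(\<kappa>0 + \<epsilon>1) * (n0 + \<epsilon>1) \<le> \<kappa>0 * n0 + \<epsilon>"
    proof -
      have "(\<kappa>0 + \<epsilon>1) * (n0 + \<epsilon>1) = \<kappa>0 * n0 + \<epsilon>1 * (\<kappa>0 + n0 + \<epsilon>1)" by (simp add: algebra_simps)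
      also have "\<dots> \<le> \<kappa>0 * n0 + \<epsilon>1 * (\<kappa>0 + n0 + 1)" using e1 by (intro add_left_mono mult_left_mono) auto
      finally show ?thesis using e1(3) by linarith
    qed
    obtain \<rho> where \<rho>: "\<rho> > 0" "\<forall>y\<in>ball (\<eta> r) \<rho>. \<forall>z\<in>ball (\<eta> r) \<rho>. \<bar>\<phi> y - \<phi> z\<bar> \<le> (\<kappa>0 + \<epsilon>1) * norm (y - z)"
      using lip[OF r e1(1)] unfolding \<kappa>0_def by blast
    have "(\<eta> has_derivative (\<lambda>h. h *\<^sub>R \<eta>' r)) (at r)" using der[OF r] by (simp add: has_vector_derivative_def)
    then obtain \<delta>1 where \<delta>1: "\<delta>1 > 0" "\<And>u. norm (u - r) < \<delta>1 \<Longrightarrow> norm (\<eta> u - \<eta> r - (u - r) *\<^sub>R \<eta>' r) \<le> \<epsilon>1 * norm (u - r)"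
      using e1(1) unfolding has_derivative_at_alt by blast
    define \<delta> where "\<delta> = min \<delta>1 (\<rho> / (n0 + 2))"
    have \<delta>: "\<delta> > 0" using \<delta>1 \<rho> n0 by (auto simp: \<delta>_def)
    show "\<exists>\<delta>>0. \<forall>u. \<bar>u - r\<bar> < \<delta> \<longrightarrow> \<bar>(\<phi> \<circ> \<eta>) u - (\<phi> \<circ> \<eta>) r\<bar> \<le> (\<kappa> r * norm (\<eta>' r) + \<epsilon>) * \<bar>u - r\<bar>"
    proof (intro exI[of _ \<delta>] conjI allI impI)
      fix u assume u: "\<bar>u - r\<bar> < \<delta>"
      have "norm (\<eta> u - \<eta> r - (u - r) *\<^sub>R \<eta>' r) \<le> \<epsilon>1 * \<bar>u - r\<bar>"
        using \<delta>1(2)[of u] u by (auto simp: \<delta>_def)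
      moreover have "norm (\<eta> u - \<eta> r) \<le> norm ((u - r) *\<^sub>R \<eta>' r) + norm (\<eta> u - \<eta> r - (u - r) *\<^sub>R \<eta>' r)"
        by (rule norm_triangle_sub)
      moreover have "norm ((u - r) *\<^sub>R \<eta>' r) = n0 * \<bar>u - r\<bar>" by (simp add: n0_def)
      ultimately have nb: "norm (\<eta> u - \<eta> r) \<le> (n0 + \<epsilon>1) * \<bar>u - r\<bar>"
        by (simp add: algebra_simps)
      also have "\<dots> \<le> (n0 + 2) * \<bar>u - r\<bar>" using e1 by (intro mult_right_mono) auto
      also have "\<dots> < (n0 + 2) * (\<rho> / (n0 + 2))"
        using u n0 by (intro mult_strict_left_mono) (auto simp: \<delta>_def)
      also have "\<dots> = \<rho>" using n0 by simp
      finally have "\<eta> u \<in> ball (\<eta> r) \<rho>" by (simp add: dist_norm norm_minus_commute)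
      then have "\<bar>\<phi> (\<eta> u) - \<phi> (\<eta> r)\<bar> \<le> (\<kappa>0 + \<epsilon>1) * norm (\<eta> u - \<eta> r)"
        using \<rho> by auto
      also have "\<dots> \<le> (\<kappa>0 + \<epsilon>1) * ((n0 + \<epsilon>1) * \<bar>u - r\<bar>)"
        using nb k0 e1 by (intro mult_left_mono) auto
      also have "\<dots> \<le> (\<kappa>0 * n0 + \<epsilon>) * \<bar>u - r\<bar>"
        using prod by (simp add: mult.assoc[symmetric] mult_right_mono)
      finally show "\<bar>(\<phi> \<circ> \<eta>) u - (\<phi> \<circ> \<eta>) r\<bar> \<le> (\<kappa> r * norm (\<eta>' r) + \<epsilon>) * \<bar>u - r\<bar>"
        by (simp add: \<kappa>0_def n0_def)
    qed (use \<delta> in auto)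
  qed
  then show ?thesis by simp
qed


lemma amgm_vec:
  fixes v y :: "'a::real_inner"
  assumes \<tau>: "\<tau> > 0" and k0: "k0 \<ge> 0"
  shows "k0 * norm (\<tau> *\<^sub>R v - y) \<le> \<tau> * (norm v)\<^sup>2 / 2 - v \<bullet> y + (norm y)\<^sup>2 / (2 * \<tau>) + \<tau> * k0\<^sup>2 / 2"
proof -
  define A where "A = norm (\<tau> *\<^sub>R v - y)"
  have A2: "A\<^sup>2 = \<tau>\<^sup>2 * (norm v)\<^sup>2 - 2 * \<tau> * (v \<bullet> y) + (norm y)\<^sup>2"
    unfolding A_def power2_norm_eq_inner
    by (simp add: inner_diff_left inner_diff_right inner_commute power2_eq_square algebra_simps)
  have "2 * (\<tau> * k0) * A \<le> A\<^sup>2 + (\<tau> * k0)\<^sup>2"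
    using sum_squares_bound[of A "\<tau> * k0"] by (simp add: algebra_simps power2_eq_square)
  then have "2 * \<tau> * (k0 * A) \<le> \<tau>\<^sup>2 * (norm v)\<^sup>2 - 2 * \<tau> * (v \<bullet> y) + (norm y)\<^sup>2 + \<tau>\<^sup>2 * k0\<^sup>2"
    by (simp add: A2 algebra_simps power_mult_distrib)
  then have "k0 * A \<le> (\<tau>\<^sup>2 * (norm v)\<^sup>2 - 2 * \<tau> * (v \<bullet> y) + (norm y)\<^sup>2 + \<tau>\<^sup>2 * k0\<^sup>2) / (2 * \<tau>)"
    using \<tau> by (simp add: field_simps)
  also have "\<dots> = \<tau> * (norm v)\<^sup>2 / 2 - v \<bullet> y + (norm y)\<^sup>2 / (2 * \<tau>) + \<tau> * k0\<^sup>2 / 2"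
    using \<tau> by (simp add: field_simps power2_eq_square)
  finally show ?thesis by (simp add: A_def)
qed


lemma sandwich:
  fixes w :: "'a::real_inner \<Rightarrow> real" and \<eta> :: "real \<Rightarrow> 'a"
  assumes k0: "k0 \<ge> 0"
    and F1: "\<And>\<epsilon>. \<epsilon> > 0 \<Longrightarrow> \<exists>r>0. \<forall>y\<in>ball x r. \<forall>z\<in>ball x r. \<bar>w y - w z\<bar> \<le> (k0 + \<epsilon>) * norm (y - z)"
    and F2: "\<And>\<epsilon>. \<epsilon> > 0 \<Longrightarrow> \<exists>\<delta>>0. \<forall>\<tau>. 0 < \<tau> \<and> \<tau> < \<delta> \<longrightarrow>
               \<bar>w (\<eta> (t0 + \<tau>)) - w x - \<tau> * k0\<^sup>2\<bar> \<le> \<epsilon> * \<tau> \<and> \<bar>w (\<eta> (t0 - \<tau>)) - w x + \<tau> * k0\<^sup>2\<bar> \<le> \<epsilon> * \<tau>"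
    and F3: "\<And>\<epsilon>. \<epsilon> > 0 \<Longrightarrow> \<exists>\<delta>>0. \<forall>\<tau>. 0 < \<tau> \<and> \<tau> < \<delta> \<longrightarrow>
               norm (\<eta> (t0 + \<tau>) - x) \<le> (k0 + \<epsilon>) * \<tau> \<and> norm (\<eta> (t0 - \<tau>) - x) \<le> (k0 + \<epsilon>) * \<tau>"
    and M: "M > 0" and \<epsilon>: "\<epsilon> > 0"
  shows "\<exists>\<rho>>0. \<forall>y. norm y < \<rho> \<longrightarrow>
           \<bar>w (x + y) - w x - ((\<eta> (t0 + M * norm y) - x) /\<^sub>R (M * norm y)) \<bullet> y\<bar> \<le> (2 / M + 3 * \<epsilon>) * norm y"
proof -
  define C where "C = M * (4 * k0 + 5) / 2 + 1"
  have "0 \<le> M * (4 * k0 + 5)" using M k0 by simp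
  then have Cpos: "C > 0" by (simp add: C_def)
  define \<epsilon>1 where "\<epsilon>1 = min 1 (\<epsilon> / C)"
  have e1: "\<epsilon>1 > 0" "\<epsilon>1 \<le> 1" "\<epsilon>1 * C \<le> \<epsilon>"
  proof -
    show "\<epsilon>1 > 0" "\<epsilon>1 \<le> 1" using \<epsilon> Cpos by (auto simp: \<epsilon>1_def)
    have "\<epsilon>1 * C \<le> \<epsilon> / C * C" using Cpos by (intro mult_right_mono) (auto simp: \<epsilon>1_def)
    then show "\<epsilon>1 * C \<le> \<epsilon>" using Cpos by simp
  qed
  obtain r where r: "r > 0" "\<forall>y\<in>ball x r. \<forall>z\<in>ball x r. \<bar>w y - w z\<bar> \<le> (k0 + \<epsilon>1) * norm (y - z)"
    using F1[OF e1(1)] by blast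
  obtain \<delta>2 where \<delta>2: "\<delta>2 > 0" "\<forall>\<tau>. 0 < \<tau> \<and> \<tau> < \<delta>2 \<longrightarrow>
       \<bar>w (\<eta> (t0 + \<tau>)) - w x - \<tau> * k0\<^sup>2\<bar> \<le> \<epsilon>1 * \<tau> \<and> \<bar>w (\<eta> (t0 - \<tau>)) - w x + \<tau> * k0\<^sup>2\<bar> \<le> \<epsilon>1 * \<tau>"
    using F2[OF e1(1)] by blast
  obtain \<delta>3 where \<delta>3: "\<delta>3 > 0" "\<forall>\<tau>. 0 < \<tau> \<and> \<tau> < \<delta>3 \<longrightarrow>
       norm (\<eta> (t0 + \<tau>) - x) \<le> (k0 + \<epsilon>1) * \<tau> \<and> norm (\<eta> (t0 - \<tau>) - x) \<le> (k0 + \<epsilon>1) * \<tau>"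
    using F3[OF e1(1)] by blast
  define \<rho> where "\<rho> = min r (min (\<delta>2 / M) (min (\<delta>3 / M) (r / ((k0 + 1) * M))))"
  have \<rho>: "\<rho> > 0" using r \<delta>2 \<delta>3 M k0 by (auto simp: \<rho>_def)
  define e where "e = 1 / (2 * M) + \<epsilon>1 * C"
  define vp where "vp s = (\<eta> (t0 + M * s) - x) /\<^sub>R (M * s)" for s
  define vm where "vm s = (x - \<eta> (t0 - M * s)) /\<^sub>R (M * s)" for s
  have two: "vp s \<bullet> y - s * e \<le> w (x + y) - w x \<and> w (x + y) - w x \<le> vm s \<bullet> y + s * e"
    if y: "norm y = s" and s: "0 < s" "s < \<rho>" for y s
  proof -
    define \<tau> where "\<tau> = M * s"
    have \<tau>: "\<tau> > 0" using M s by (simp add: \<tau>_def)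
    have \<tau>2: "\<tau> < \<delta>2" using s M by (auto simp: \<tau>_def \<rho>_def field_simps)
    have \<tau>3: "\<tau> < \<delta>3" using s M by (auto simp: \<tau>_def \<rho>_def field_simps)
    have sr: "s < r" using s by (auto simp: \<rho>_def)
    have kt: "(k0 + 1) * \<tau> < r"
    proof -
      have "s < r / ((k0 + 1) * M)" using s by (auto simp: \<rho>_def)
      moreover have pos: "(k0 + 1) * M > 0" using M k0 by simp
      ultimately have "s * ((k0 + 1) * M) < r" by (simp add: pos_less_divide_eq)
      then show ?thesis by (simp add: \<tau>_def algebra_simps)
    qed
    have P: "\<bar>w (\<eta> (t0 + \<tau>)) - w x - \<tau> * k0\<^sup>2\<bar> \<le> \<epsilon>1 * \<tau>" "\<bar>w (\<eta> (t0 - \<tau>)) - w x + \<tau> * k0\<^sup>2\<bar> \<le> \<epsilon>1 * \<tau>"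
      using \<delta>2(2) \<tau> \<tau>2 by auto
    have Q: "norm (\<eta> (t0 + \<tau>) - x) \<le> (k0 + \<epsilon>1) * \<tau>" "norm (\<eta> (t0 - \<tau>) - x) \<le> (k0 + \<epsilon>1) * \<tau>"
      using \<delta>3(2) \<tau> \<tau>3 by auto
    have Qr: "norm (\<eta> (t0 + \<tau>) - x) < r" "norm (\<eta> (t0 - \<tau>) - x) < r"
    proof -
      have "(k0 + \<epsilon>1) * \<tau> \<le> (k0 + 1) * \<tau>" using e1 \<tau> by (intro mult_right_mono) auto
      then show "norm (\<eta> (t0 + \<tau>) - x) < r" "norm (\<eta> (t0 - \<tau>) - x) < r" using Q kt by linarith+
    qed
    have inb: "\<eta> (t0 + \<tau>) \<in> ball x r" "\<eta> (t0 - \<tau>) \<in> ball x r" "x + y \<in> ball x r"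
      using Qr sr y by (auto simp: dist_norm norm_minus_commute)
    define v where "v = vp s"
    define v' where "v' = vm s"
    have vdef: "\<eta> (t0 + \<tau>) - x = \<tau> *\<^sub>R v" unfolding v_def vp_def \<tau>_def[symmetric] using \<tau> by simp
    have v'def: "x - \<eta> (t0 - \<tau>) = \<tau> *\<^sub>R v'" unfolding v'_def vm_def \<tau>_def[symmetric] using \<tau> by simp
    have nv: "norm v \<le> k0 + \<epsilon>1"
    proof -
      have "\<tau> * norm v \<le> (k0 + \<epsilon>1) * \<tau>" using Q(1) vdef \<tau> by simp
      then show ?thesis using \<tau> by (simp add: mult.commute)
    qed
    have nv': "norm v' \<le> k0 + \<epsilon>1"
    proof -
      have "\<tau> * norm v' \<le> (k0 + \<epsilon>1) * \<tau>" using Q(2) v'def \<tau> by (simp add: norm_minus_commute)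
      then show ?thesis using \<tau> by (simp add: mult.commute)
    qed
    have nv2: "(norm v)\<^sup>2 \<le> k0\<^sup>2 + \<epsilon>1 * (2 * k0 + 1)"
    proof -
      have "(norm v)\<^sup>2 \<le> (k0 + \<epsilon>1)\<^sup>2" using nv by (intro power_mono) auto
      also have "\<dots> = k0\<^sup>2 + \<epsilon>1 * (2 * k0 + \<epsilon>1)" by (simp add: power2_eq_square algebra_simps)
      also have "\<dots> \<le> k0\<^sup>2 + \<epsilon>1 * (2 * k0 + 1)" using e1 by (intro add_left_mono mult_left_mono) auto
      finally show ?thesis .
    qed
    have nv2': "(norm v')\<^sup>2 \<le> k0\<^sup>2 + \<epsilon>1 * (2 * k0 + 1)"
    proof -
      have "(norm v')\<^sup>2 \<le> (k0 + \<epsilon>1)\<^sup>2" using nv' by (intro power_mono) auto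
      also have "\<dots> = k0\<^sup>2 + \<epsilon>1 * (2 * k0 + \<epsilon>1)" by (simp add: power2_eq_square algebra_simps)
      also have "\<dots> \<le> k0\<^sup>2 + \<epsilon>1 * (2 * k0 + 1)" using e1 by (intro add_left_mono mult_left_mono) auto
      finally show ?thesis .
    qed
    have ss: "(norm y)\<^sup>2 / (2 * \<tau>) = s / (2 * M)" using y s M by (simp add: \<tau>_def power2_eq_square field_simps)
    define A where "A = \<tau> *\<^sub>R v - y"
    have eA: "\<eta> (t0 + \<tau>) - (x + y) = A" using vdef by (simp add: A_def algebra_simps)
    have lipA: "\<bar>w (\<eta> (t0 + \<tau>)) - w (x + y)\<bar> \<le> (k0 + \<epsilon>1) * norm A"
      using r(2) inb eA by auto
    have amA: "k0 * norm A \<le> \<tau> * (norm v)\<^sup>2 / 2 - v \<bullet> y + s / (2 * M) + \<tau> * k0\<^sup>2 / 2"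
      using amgm_vec[OF \<tau> k0, of v y] ss by (simp add: A_def)
    have nA: "norm A \<le> \<tau> * (k0 + 1) + s"
    proof -
      have "norm A \<le> norm (\<tau> *\<^sub>R v) + norm y" unfolding A_def by (rule norm_triangle_ineq4)
      also have "norm (\<tau> *\<^sub>R v) \<le> \<tau> * (k0 + 1)" using \<tau> nv e1 by (simp add: mult_left_mono)
      finally show ?thesis using y by simp
    qed
    define a1 where "a1 = \<epsilon>1 * \<tau>"
    define a2 where "a2 = \<epsilon>1 * s"
    define a3 where "a3 = \<epsilon>1 * \<tau> * k0"
    define B1 where "B1 = \<tau> * k0\<^sup>2"
    have sumE: "s * e = s / (2 * M) + (2 * a3 + 5 / 2 * a1 + a2)"
      by (simp add: e_def C_def a1_def a2_def a3_def \<tau>_def algebra_simps)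
    have low: "w (x + y) - w x \<ge> v \<bullet> y - s * e"
    proof -
      have f1: "w (x + y) \<ge> w (\<eta> (t0 + \<tau>)) - k0 * norm A - \<epsilon>1 * norm A" using lipA by (simp add: algebra_simps)
      have f2: "w (\<eta> (t0 + \<tau>)) \<ge> w x + B1 - a1" using P(1) by (simp add: B1_def a1_def algebra_simps)
      have "\<epsilon>1 * norm A \<le> \<epsilon>1 * (\<tau> * (k0 + 1) + s)" using nA e1 by (intro mult_left_mono) auto
      also have "\<dots> = a3 + a1 + a2" by (simp add: a1_def a2_def a3_def algebra_simps)
      finally have f3: "\<epsilon>1 * norm A \<le> a3 + a1 + a2" .
      have "\<tau> * (norm v)\<^sup>2 \<le> \<tau> * (k0\<^sup>2 + \<epsilon>1 * (2 * k0 + 1))" using nv2 \<tau> by (intro mult_left_mono) auto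
      also have "\<dots> = B1 + 2 * a3 + a1" by (simp add: a1_def a3_def B1_def algebra_simps)
      finally have f4: "\<tau> * (norm v)\<^sup>2 \<le> B1 + 2 * a3 + a1" .
      have f5: "k0 * norm A \<le> \<tau> * (norm v)\<^sup>2 / 2 - v \<bullet> y + s / (2 * M) + B1 / 2" using amA by (simp add: B1_def)
      show ?thesis using f1 f2 f3 f4 f5 sumE by linarith
    qed
    define A' where "A' = \<tau> *\<^sub>R v' - (- y)"
    have eA': "(x + y) - \<eta> (t0 - \<tau>) = A'" using v'def by (simp add: A'_def algebra_simps)
    have lipA': "\<bar>w (x + y) - w (\<eta> (t0 - \<tau>))\<bar> \<le> (k0 + \<epsilon>1) * norm A'"
      using r(2) inb eA' by auto
    have amA': "k0 * norm A' \<le> \<tau> * (norm v')\<^sup>2 / 2 + v' \<bullet> y + s / (2 * M) + \<tau> * k0\<^sup>2 / 2"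
      using amgm_vec[OF \<tau> k0, of v' "- y"] ss by (simp add: A'_def)
    have nA': "norm A' \<le> \<tau> * (k0 + 1) + s"
    proof -
      have "norm A' \<le> norm (\<tau> *\<^sub>R v') + norm y" unfolding A'_def diff_minus_eq_add by (rule norm_triangle_ineq)
      also have "norm (\<tau> *\<^sub>R v') \<le> \<tau> * (k0 + 1)" using \<tau> nv' e1 by (simp add: mult_left_mono)
      finally show ?thesis using y by simp
    qed
    have up: "w (x + y) - w x \<le> v' \<bullet> y + s * e"
    proof -
      have f1: "w (x + y) \<le> w (\<eta> (t0 - \<tau>)) + k0 * norm A' + \<epsilon>1 * norm A'" using lipA' by (simp add: algebra_simps)
      have f2: "w (\<eta> (t0 - \<tau>)) \<le> w x - B1 + a1" using P(2) by (simp add: B1_def a1_def algebra_simps)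
      have "\<epsilon>1 * norm A' \<le> \<epsilon>1 * (\<tau> * (k0 + 1) + s)" using nA' e1 by (intro mult_left_mono) auto
      also have "\<dots> = a3 + a1 + a2" by (simp add: a1_def a2_def a3_def algebra_simps)
      finally have f3: "\<epsilon>1 * norm A' \<le> a3 + a1 + a2" .
      have "\<tau> * (norm v')\<^sup>2 \<le> \<tau> * (k0\<^sup>2 + \<epsilon>1 * (2 * k0 + 1))" using nv2' \<tau> by (intro mult_left_mono) auto
      also have "\<dots> = B1 + 2 * a3 + a1" by (simp add: a1_def a3_def B1_def algebra_simps)
      finally have f4: "\<tau> * (norm v')\<^sup>2 \<le> B1 + 2 * a3 + a1" .
      have f5: "k0 * norm A' \<le> \<tau> * (norm v')\<^sup>2 / 2 + v' \<bullet> y + s / (2 * M) + B1 / 2" using amA' by (simp add: B1_def)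
      show ?thesis using f1 f2 f3 f4 f5 sumE by linarith
    qed
    show ?thesis using low up by (simp add: v_def v'_def)
  qed
  have vclose: "norm (vp s - vm s) \<le> 2 * e" if s: "0 < s" "s < \<rho>" for s
  proof (cases "vp s = vm s")
    case True then show ?thesis using e1 M Cpos by (simp add: e_def)
  next
    case False
    define u where "u = (s / norm (vp s - vm s)) *\<^sub>R (vp s - vm s)"
    have nu: "norm u = s" using False s by (simp add: u_def)
    have "vp s \<bullet> u - s * e \<le> vm s \<bullet> u + s * e" using two[OF nu s] by linarith
    then have "(vp s - vm s) \<bullet> u \<le> 2 * s * e" by (simp add: inner_diff_left algebra_simps)
    moreover have "(vp s - vm s) \<bullet> u = s * norm (vp s - vm s)"
      using False by (simp add: u_def power2_norm_eq_inner[symmetric] power2_eq_square)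
    ultimately have "s * norm (vp s - vm s) \<le> s * (2 * e)" by simp
    then show ?thesis using s by simp
  qed
  show ?thesis
  proof (intro exI[of _ \<rho>] conjI allI impI)
    show "\<rho> > 0" by (rule \<rho>)
    fix y :: 'a assume y: "norm y < \<rho>"
    show "\<bar>w (x + y) - w x - ((\<eta> (t0 + M * norm y) - x) /\<^sub>R (M * norm y)) \<bullet> y\<bar> \<le> (2 / M + 3 * \<epsilon>) * norm y"
    proof (cases "y = 0")
      case True then show ?thesis by simp
    next
      case False
      define s where "s = norm y"
      have s: "0 < s" "s < \<rho>" using False y by (auto simp: s_def)
      have T: "vp s \<bullet> y - s * e \<le> w (x + y) - w x" "w (x + y) - w x \<le> vm s \<bullet> y + s * e"
        using two[OF s_def[symmetric] s] by auto
      have "\<bar>(vm s - vp s) \<bullet> y\<bar> \<le> norm (vm s - vp s) * norm y" by (rule Cauchy_Schwarz_ineq2)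
      also have "\<dots> \<le> 2 * e * s" using vclose[OF s] by (simp add: s_def norm_minus_commute mult_right_mono)
      also have "\<dots> = 2 * (s * e)" by simp
      finally have "\<bar>(vm s - vp s) \<bullet> y\<bar> \<le> 2 * (s * e)" .
      then have "vm s \<bullet> y - vp s \<bullet> y \<le> 2 * (s * e)" by (simp add: inner_diff_left abs_le_iff)
      then have "\<bar>w (x + y) - w x - vp s \<bullet> y\<bar> \<le> 3 * (s * e)"
        using T by (simp only: abs_le_iff) linarith
      also have "3 * (s * e) \<le> (2 / M + 3 * \<epsilon>) * s"
      proof -
        have "3 * e = 3 / (2 * M) + 3 * (\<epsilon>1 * C)" by (simp add: e_def algebra_simps)
        also have "\<dots> \<le> 2 / M + 3 * \<epsilon>"
        proof -
          have "3 / (2 * M) \<le> 2 / M" using M by (simp add: field_simps)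
          then show ?thesis using e1(3) by linarith
        qed
        finally have "3 * e * s \<le> (2 / M + 3 * \<epsilon>) * s" using s by (intro mult_right_mono) auto
        then show ?thesis by (simp add: mult_ac)
      qed
      finally show ?thesis by (simp add: s_def vp_def)
    qed
  qed
qed


definition kk :: "(real^'n \<Rightarrow> real) \<Rightarrow> real \<Rightarrow> real^'n \<Rightarrow> real" where
  "kk V c x = sqrt (2 * max 0 (c - V x))"

lemma kk_nonneg: "kk V c x \<ge> 0" by (simp add: kk_def)

lemma kk_cont: "continuous_on UNIV V \<Longrightarrow> continuous_on UNIV (kk V c)"
  unfolding kk_def by (intro continuous_intros) auto

lemma kk_sq: "V x \<le> c \<Longrightarrow> (kk V c x)\<^sup>2 = 2 * (c - V x)"
  by (simp add: kk_def)

lemma curve_unif_lip: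
  fixes w :: "real^'n \<Rightarrow> real" and g :: "real^'n \<Rightarrow> real^'n"
  assumes W: "W1inf_grad U w g" and U: "open U" and Vc: "continuous_on UNIV V"
    and bd: "AE v in lebesgue. v \<in> U \<longrightarrow> norm (g v) \<le> kk V c v"
    and C: "compact C" "C \<subseteq> U"
  shows "\<exists>r>0. \<exists>L\<ge>0. \<forall>x\<in>C. \<forall>y\<in>ball x r. \<forall>z\<in>ball x r. \<bar>w y - w z\<bar> \<le> L * norm (y - z)"
proof -
  have kc: "continuous_on UNIV (kk V c)" using kk_cont[OF Vc] .
  have "\<forall>x\<in>C. \<exists>r>0. ball x r \<subseteq> U \<and> (\<forall>y\<in>ball x r. \<forall>z\<in>ball x r. \<bar>w y - w z\<bar> \<le> (kk V c x + 1) * norm (y - z))"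
    using local_lip[OF W U kc bd kk_nonneg, of _ 1] C(2) by auto
  then obtain R where R: "\<And>x. x \<in> C \<Longrightarrow> R x > 0 \<and> (\<forall>y\<in>ball x (R x). \<forall>z\<in>ball x (R x). \<bar>w y - w z\<bar> \<le> (kk V c x + 1) * norm (y - z))"
    by metis
  obtain \<epsilon>0 where \<epsilon>0: "\<epsilon>0 > 0" "\<And>x. x \<in> C \<Longrightarrow> \<exists>G \<in> (\<lambda>x. ball x (R x)) ` C. ball x \<epsilon>0 \<subseteq> G"
  proof (rule Heine_Borel_lemma[OF C(1), of "(\<lambda>x. ball x (R x)) ` C"])
    show "C \<subseteq> \<Union> ((\<lambda>x. ball x (R x)) ` C)" using R by force
  qed auto
  have "bounded (kk V c ` C)" by (rule compact_imp_bounded, rule compact_continuous_image[OF continuous_on_subset[OF kc] C(1)]) auto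
  then obtain Kb where Kb: "\<And>x. x \<in> C \<Longrightarrow> norm (kk V c x) \<le> Kb" by (auto simp: bounded_iff)
  define L where "L = max 0 Kb + 1"
  have "\<forall>x\<in>C. \<forall>y\<in>ball x \<epsilon>0. \<forall>z\<in>ball x \<epsilon>0. \<bar>w y - w z\<bar> \<le> L * norm (y - z)"
  proof (intro ballI)
    fix x y z assume x: "x \<in> C" and y: "y \<in> ball x \<epsilon>0" and z: "z \<in> ball x \<epsilon>0"
    obtain x' where x': "x' \<in> C" "ball x \<epsilon>0 \<subseteq> ball x' (R x')" using \<epsilon>0(2)[OF x] by blast
    have "\<bar>w y - w z\<bar> \<le> (kk V c x' + 1) * norm (y - z)" using R[OF x'(1)] x'(2) y z by blast
    also have "\<dots> \<le> L * norm (y - z)"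
      using Kb[OF x'(1)] kk_nonneg[of V c x'] by (intro mult_right_mono) (auto simp: L_def)
    finally show "\<bar>w y - w z\<bar> \<le> L * norm (y - z)" .
  qed
  moreover have "L \<ge> 0" by (simp add: L_def)
  ultimately show ?thesis using \<epsilon>0(1) by blast
qed

lemma integral_close:
  fixes h :: "real \<Rightarrow> real"
  assumes pq: "p \<le> q" and hi: "h integrable_on {p..q}" and cl: "\<And>r. r \<in> {p..q} \<Longrightarrow> \<bar>h r - h0\<bar> \<le> \<epsilon>"
  shows "\<bar>integral {p..q} h - (q - p) * h0\<bar> \<le> \<epsilon> * (q - p)"
proof -
  have "((\<lambda>r. h r - h0) has_integral (integral {p..q} h - (q - p) * h0)) {p..q}"
    using has_integral_diff[OF integrable_integral[OF hi] has_integral_const_real[of h0 p q]] pq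
    by (simp add: mult.commute)
  moreover have "((\<lambda>r. \<epsilon>) has_integral \<epsilon> * (q - p)) {p..q}"
    using has_integral_const_real[of \<epsilon> p q] pq by (simp add: mult.commute)
  ultimately show ?thesis using cl by (rule integral_bound_nonneg)
qed


lemma calib_ineq:
  fixes U :: "(real^'n) set" and w :: "real^'n \<Rightarrow> real" and g :: "real^'n \<Rightarrow> real^'n"
    and \<eta> \<eta>' :: "real \<Rightarrow> real^'n"
  assumes U: "open U" and Vc: "continuous_on UNIV V" and W: "W1inf_grad U w g"
    and bd: "AE v in lebesgue. v \<in> U \<longrightarrow> norm (g v) \<le> kk V c v"
    and AC: "AC_curve a b U \<eta>" and N: "negligible N"
    and der: "\<And>r. r \<in> {a..b} \<Longrightarrow> r \<notin> N \<Longrightarrow> (\<eta> has_vector_derivative \<eta>' r) (at r)"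
    and fint: "(\<lambda>r. kk V c (\<eta> r) * norm (\<eta>' r)) integrable_on {a..b}"
    and st: "a \<le> s" "s \<le> t" "t \<le> b"
  shows "w (\<eta> t) - w (\<eta> s) \<le> integral {s..t} (\<lambda>r. kk V c (\<eta> r) * norm (\<eta>' r))"
proof -
  have etac: "continuous_on {a..b} \<eta>" by (rule AC_cont[OF AC])
  have sub: "\<eta> ` {a..b} \<subseteq> U" using AC by (simp add: AC_curve_def)
  have cpt: "compact (\<eta> ` {a..b})" by (rule compact_continuous_image[OF etac compact_Icc])
  obtain r0 Lw where r0: "r0 > 0" "Lw \<ge> 0"
    "\<And>x y z. x \<in> \<eta> ` {a..b} \<Longrightarrow> y \<in> ball x r0 \<Longrightarrow> z \<in> ball x r0 \<Longrightarrow> \<bar>w y - w z\<bar> \<le> Lw * norm (y - z)"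
    using curve_unif_lip[OF W U Vc bd cpt sub] by blast
  have ACw: "AC_curve a b UNIV (w \<circ> \<eta>)" by (rule AC_comp_lip[OF AC r0])
  have ACs: "AC_curve s t UNIV (w \<circ> \<eta>)" by (rule AC_sub[OF ACw st(1) st(3)])
  show ?thesis
  proof (rule dini_curve[OF st(2) ACs N])
    fix r assume "r \<in> {s..t}" "r \<notin> N"
    then show "(\<eta> has_vector_derivative \<eta>' r) (at r)" using der st by auto
  next
    fix r \<epsilon> :: real assume r: "r \<in> {s..t}" "r \<notin> N" and \<epsilon>: "\<epsilon> > 0"
    have "\<eta> r \<in> U" using sub r st by auto
    then show "\<exists>\<rho>>0. \<forall>y\<in>ball (\<eta> r) \<rho>. \<forall>z\<in>ball (\<eta> r) \<rho>. \<bar>w y - w z\<bar> \<le> (kk V c (\<eta> r) + \<epsilon>) * norm (y - z)"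
      using local_lip[OF W U kk_cont[OF Vc] bd kk_nonneg _ \<epsilon>] by blast
  next
    fix r show "kk V c (\<eta> r) \<ge> 0" by (rule kk_nonneg)
  next
    show "((\<lambda>r. kk V c (\<eta> r) * norm (\<eta>' r)) has_integral integral {s..t} (\<lambda>r. kk V c (\<eta> r) * norm (\<eta>' r))) {s..t}"
      by (rule integrable_integral, rule integrable_subinterval_real[OF fint]) (use st in auto)
  qed
qed

lemma eta_bound:
  fixes \<eta> \<eta>' :: "real \<Rightarrow> real^'n"
  assumes AC: "AC_curve a b U \<eta>" and N: "negligible N"
    and der: "\<And>r. r \<in> {a..b} \<Longrightarrow> r \<notin> N \<Longrightarrow> (\<eta> has_vector_derivative \<eta>' r) (at r)"
    and nint: "(\<lambda>r. norm (\<eta>' r)) integrable_on {a..b}"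
    and st: "a \<le> s" "s \<le> t" "t \<le> b"
  shows "norm (\<eta> t - \<eta> s) \<le> integral {s..t} (\<lambda>r. norm (\<eta>' r))"
proof (cases "\<eta> t = \<eta> s")
  case True
  have "integral {s..t} (\<lambda>r. norm (\<eta>' r)) \<ge> 0"
    by (rule integral_nonneg) (rule integrable_subinterval_real[OF nint], use st in auto)
  then show ?thesis using True by simp
next
  case False
  define u where "u = (\<eta> t - \<eta> s) /\<^sub>R norm (\<eta> t - \<eta> s)"
  have nu: "norm u = 1" using False by (simp add: u_def)
  have lip: "\<bar>u \<bullet> y - u \<bullet> z\<bar> \<le> 1 * norm (y - z)" for y z
    using Cauchy_Schwarz_ineq2[of u "y - z"] nu by (simp add: inner_diff_right)
  have ACu: "AC_curve a b UNIV ((\<lambda>y. u \<bullet> y) \<circ> \<eta>)"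
    by (rule AC_comp_lip[where L=1, OF AC zero_less_one]) (use lip in auto)
  have ACs: "AC_curve s t UNIV ((\<lambda>y. u \<bullet> y) \<circ> \<eta>)" by (rule AC_sub[OF ACu st(1) st(3)])
  have "u \<bullet> \<eta> t - u \<bullet> \<eta> s \<le> integral {s..t} (\<lambda>r. norm (\<eta>' r))"
  proof (rule dini_curve[OF st(2) ACs N, where \<kappa>="\<lambda>_. 1"])
    fix r assume "r \<in> {s..t}" "r \<notin> N"
    then show "(\<eta> has_vector_derivative \<eta>' r) (at r)" using der st by auto
  next
    fix \<epsilon> :: real assume \<epsilon>: "\<epsilon> > 0"
    show "\<exists>\<rho>>0. \<forall>y\<in>ball (\<eta> r) \<rho>. \<forall>z\<in>ball (\<eta> r) \<rho>. \<bar>u \<bullet> y - u \<bullet> z\<bar> \<le> (1 + \<epsilon>) * norm (y - z)" for r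
    proof (intro exI[of _ 1] conjI ballI)
      fix y z :: "real^'n"
      have "\<bar>u \<bullet> y - u \<bullet> z\<bar> \<le> 1 * norm (y - z)" by (rule lip)
      also have "\<dots> \<le> (1 + \<epsilon>) * norm (y - z)" using \<epsilon> by (intro mult_right_mono) auto
      finally show "\<bar>u \<bullet> y - u \<bullet> z\<bar> \<le> (1 + \<epsilon>) * norm (y - z)" .
    qed auto
  next
    have "((\<lambda>r. norm (\<eta>' r)) has_integral integral {s..t} (\<lambda>r. norm (\<eta>' r))) {s..t}"
      by (rule integrable_integral, rule integrable_subinterval_real[OF nint]) (use st in auto)
    then show "((\<lambda>r. 1 * norm (\<eta>' r)) has_integral integral {s..t} (\<lambda>r. norm (\<eta>' r))) {s..t}" by simp
  qed auto
  moreover have "u \<bullet> \<eta> t - u \<bullet> \<eta> s = norm (\<eta> t - \<eta> s)"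
    using False by (simp add: u_def inner_diff_right[symmetric] power2_norm_eq_inner[symmetric] power2_eq_square divide_simps)
  ultimately show ?thesis by simp
qed


lemma core_facts:
  fixes U :: "(real^'n) set" and V :: "real^'n \<Rightarrow> real" and c a b :: real
    and w1 w2 :: "real^'n \<Rightarrow> real" and g1 g2 :: "real^'n \<Rightarrow> real^'n"
    and \<eta> :: "real \<Rightarrow> real^'n" and \<eta>' :: "real \<Rightarrow> real^'n"
  assumes "open U" and "periodic_potential V"
    and "W1inf_grad U w1 g1" and "W1inf_grad U w2 g2"
    and "AE x in lebesgue. x \<in> U \<longrightarrow> (1/2) * (norm (g1 x))\<^sup>2 + V x \<le> c"
    and "AE x in lebesgue. x \<in> U \<longrightarrow> (1/2) * (norm (g2 x))\<^sup>2 + V x \<le> c"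
    and "AC_curve a b U \<eta>"
    and "AE t in lebesgue. t \<in> {a..b} \<longrightarrow> (\<eta> has_vector_derivative \<eta>' t) (at t)"
    and "((\<lambda>t. (1/2) * (norm (\<eta>' t))\<^sup>2 - V (\<eta> t) + c) has_integral (w1 (\<eta> b) - w1 (\<eta> a))) {a..b}"
    and "((\<lambda>t. (1/2) * (norm (\<eta>' t))\<^sup>2 - V (\<eta> t) + c) has_integral (w2 (\<eta> b) - w2 (\<eta> a))) {a..b}"
    and ab: "a \<le> b"
  shows "(AE t in lebesgue. t \<in> {a..b} \<longrightarrow> (1/2) * (norm (\<eta>' t))\<^sup>2 + V (\<eta> t) = c)
     \<and> (\<forall>s t. a \<le> s \<and> s \<le> t \<and> t \<le> b \<longrightarrow> w1 (\<eta> t) - w1 (\<eta> s) = integral {s..t} (\<lambda>r. (kk V c (\<eta> r))\<^sup>2))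
     \<and> (\<forall>s t. a \<le> s \<and> s \<le> t \<and> t \<le> b \<longrightarrow> w2 (\<eta> t) - w2 (\<eta> s) = integral {s..t} (\<lambda>r. (kk V c (\<eta> r))\<^sup>2))
     \<and> (\<forall>s t. a \<le> s \<and> s \<le> t \<and> t \<le> b \<longrightarrow> norm (\<eta> t - \<eta> s) \<le> integral {s..t} (\<lambda>r. kk V c (\<eta> r)))"
proof -
  note U = assms(1)
  have Vc: "continuous_on UNIV V" using assms(2) by (simp add: periodic_potential_def)
  define k where "k = kk V c"
  have kc: "continuous_on UNIV k" unfolding k_def by (rule kk_cont[OF Vc])
  have knn: "k x \<ge> 0" for x by (simp add: k_def kk_nonneg)
  have Vle: "x \<in> U \<Longrightarrow> V x \<le> c" for x by (rule V_le_c[OF U Vc assms(5)])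
  have ksq: "x \<in> U \<Longrightarrow> (k x)\<^sup>2 = 2 * (c - V x)" for x using kk_sq[OF Vle] by (simp add: k_def)
  have bd1: "AE v in lebesgue. v \<in> U \<longrightarrow> norm (g1 v) \<le> kk V c v"
    using g_le_k[OF assms(5)] by (simp add: kk_def)
  have bd2: "AE v in lebesgue. v \<in> U \<longrightarrow> norm (g2 v) \<le> kk V c v"
    using g_le_k[OF assms(6)] by (simp add: kk_def)
  have etac: "continuous_on {a..b} \<eta>" by (rule AC_cont[OF assms(7)])
  have sub: "\<eta> ` {a..b} \<subseteq> U" using assms(7) by (simp add: AC_curve_def)
  obtain N0 where N0: "{t \<in> space lebesgue. \<not> (t \<in> {a..b} \<longrightarrow> (\<eta> has_vector_derivative \<eta>' t) (at t))} \<subseteq> N0"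
     "emeasure lebesgue N0 = 0" "N0 \<in> sets lebesgue"
    using assms(8) by (rule AE_E)
  have N: "negligible N0" using N0(2,3) by (simp add: negligible_iff_null_sets null_setsI)
  have der: "\<And>r. r \<in> {a..b} \<Longrightarrow> r \<notin> N0 \<Longrightarrow> (\<eta> has_vector_derivative \<eta>' r) (at r)" using N0(1) by auto
  define L where "L r = (1/2) * (norm (\<eta>' r))\<^sup>2 - V (\<eta> r) + c" for r
  have LI1: "(L has_integral (w1 (\<eta> b) - w1 (\<eta> a))) {a..b}" using assms(9) by (simp add: L_def[abs_def])
  have LI2: "(L has_integral (w2 (\<eta> b) - w2 (\<eta> a))) {a..b}" using assms(10) by (simp add: L_def[abs_def])
  have Vec: "continuous_on {a..b} (\<lambda>r. V (\<eta> r))"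
    by (rule continuous_on_compose2[OF Vc etac]) auto
  have kec: "continuous_on {a..b} (\<lambda>r. k (\<eta> r))"
    by (rule continuous_on_compose2[OF kc etac]) auto
  have Vei: "(\<lambda>r. V (\<eta> r)) integrable_on {a..b}" by (rule integrable_continuous_interval[OF Vec])
  have kei: "(\<lambda>r. k (\<eta> r)) integrable_on {a..b}" by (rule integrable_continuous_interval[OF kec])
  have k2ei: "(\<lambda>r. (k (\<eta> r))\<^sup>2) integrable_on {a..b}"
    by (rule integrable_continuous_interval) (intro continuous_intros kec)
  have Li: "L integrable_on {a..b}" using LI1 by blast
  have Qi: "(\<lambda>r. (norm (\<eta>' r))\<^sup>2) integrable_on {a..b}"
  proof -
    have "(\<lambda>r. 2 * (L r + V (\<eta> r) - c)) integrable_on {a..b}"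
      by (intro integrable_on_mult_right integrable_diff integrable_add Li Vei integrable_const_ivl)
    moreover have "(\<lambda>r. 2 * (L r + V (\<eta> r) - c)) = (\<lambda>r. (norm (\<eta>' r))\<^sup>2)" by (simp add: L_def[abs_def] fun_eq_iff)
    ultimately show ?thesis by simp
  qed
  have Qm: "(\<lambda>r. (norm (\<eta>' r))\<^sup>2) \<in> borel_measurable (lebesgue_on {a..b})"
    by (rule integrable_imp_measurable[OF Qi])
  have nm: "(\<lambda>r. norm (\<eta>' r)) \<in> borel_measurable (lebesgue_on {a..b})"
  proof -
    have "(\<lambda>r. sqrt ((norm (\<eta>' r))\<^sup>2)) \<in> borel_measurable (lebesgue_on {a..b})"
      using Qm by measurable
    then show ?thesis by simp
  qed
  have kem: "(\<lambda>r. k (\<eta> r)) \<in> borel_measurable (lebesgue_on {a..b})"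
    by (rule continuous_imp_measurable_on_sets_lebesgue[OF kec]) auto
  have fi: "(\<lambda>r. k (\<eta> r) * norm (\<eta>' r)) integrable_on {a..b}"
  proof -
    have "(\<lambda>r. k (\<eta> r) * norm (\<eta>' r)) absolutely_integrable_on {a..b}"
    proof (rule measurable_bounded_by_integrable_imp_absolutely_integrable)
      show "(\<lambda>r. k (\<eta> r) * norm (\<eta>' r)) \<in> borel_measurable (lebesgue_on {a..b})"
        using kem nm by measurable
      show "(\<lambda>r. ((k (\<eta> r))\<^sup>2 + (norm (\<eta>' r))\<^sup>2) / 2) integrable_on {a..b}"
        by (intro integrable_on_divide integrable_add k2ei Qi)
      show "norm (k (\<eta> r) * norm (\<eta>' r)) \<le> ((k (\<eta> r))\<^sup>2 + (norm (\<eta>' r))\<^sup>2) / 2" for r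
        using sum_squares_bound[of "k (\<eta> r)" "norm (\<eta>' r)"] knn[of "\<eta> r"] by (simp add: abs_mult)
    qed auto
    then show ?thesis using set_lebesgue_integral_eq_integral(1) by blast
  qed
  have ni: "(\<lambda>r. norm (\<eta>' r)) integrable_on {a..b}"
  proof -
    have "(\<lambda>r. norm (\<eta>' r)) absolutely_integrable_on {a..b}"
    proof (rule measurable_bounded_by_integrable_imp_absolutely_integrable)
      show "(\<lambda>r. norm (\<eta>' r)) \<in> borel_measurable (lebesgue_on {a..b})" by (rule nm)
      show "(\<lambda>r. (1 + (norm (\<eta>' r))\<^sup>2) / 2) integrable_on {a..b}"
        by (intro integrable_on_divide integrable_add Qi integrable_const_ivl)
      show "norm (norm (\<eta>' r)) \<le> (1 + (norm (\<eta>' r))\<^sup>2) / 2" for r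
        using sum_squares_bound[of 1 "norm (\<eta>' r)"] by simp
    qed auto
    then show ?thesis using set_lebesgue_integral_eq_integral(1) by blast
  qed
  have fi': "(\<lambda>r. kk V c (\<eta> r) * norm (\<eta>' r)) integrable_on {a..b}" using fi by (simp add: k_def)
  have calib1: "w1 (\<eta> t) - w1 (\<eta> s) \<le> integral {s..t} (\<lambda>r. k (\<eta> r) * norm (\<eta>' r))"
    if "a \<le> s" "s \<le> t" "t \<le> b" for s t
    using calib_ineq[OF U Vc assms(3) bd1 assms(7) N der fi' that] by (simp add: k_def)
  have calib2: "w2 (\<eta> t) - w2 (\<eta> s) \<le> integral {s..t} (\<lambda>r. k (\<eta> r) * norm (\<eta>' r))"
    if "a \<le> s" "s \<le> t" "t \<le> b" for s t
    using calib_ineq[OF U Vc assms(4) bd2 assms(7) N der fi' that] by (simp add: k_def)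
  have amgm: "k (\<eta> r) * norm (\<eta>' r) \<le> L r" if r: "r \<in> {a..b}" for r
  proof -
    have "\<eta> r \<in> U" using sub r by auto
    then have K: "(k (\<eta> r))\<^sup>2 = 2 * (c - V (\<eta> r))" by (rule ksq)
    have "2 * (k (\<eta> r) * norm (\<eta>' r)) \<le> (k (\<eta> r))\<^sup>2 + (norm (\<eta>' r))\<^sup>2"
      using sum_squares_bound[of "k (\<eta> r)" "norm (\<eta>' r)"] by simp
    then show ?thesis unfolding L_def using K by simp
  qed
  have ptw: "norm (\<eta>' r) = k (\<eta> r) \<and> (1/2) * (norm (\<eta>' r))\<^sup>2 + V (\<eta> r) = c"
    if r: "r \<in> {a..b}" and eq: "L r - k (\<eta> r) * norm (\<eta>' r) = 0" for r
  proof -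
    have "\<eta> r \<in> U" using sub r by auto
    then have K: "(k (\<eta> r))\<^sup>2 = 2 * (c - V (\<eta> r))" by (rule ksq)
    have "(k (\<eta> r) - norm (\<eta>' r))\<^sup>2 = (k (\<eta> r))\<^sup>2 - 2 * (k (\<eta> r) * norm (\<eta>' r)) + (norm (\<eta>' r))\<^sup>2"
      by (simp add: power2_eq_square algebra_simps)
    also have "\<dots> = 0" using K eq by (simp add: L_def algebra_simps)
    finally have n: "norm (\<eta>' r) = k (\<eta> r)" by simp
    then have "(1/2) * (norm (\<eta>' r))\<^sup>2 + V (\<eta> r) = c" using K by (simp add: field_simps)
    then show ?thesis using n by simp
  qed
  have P1: "AE t in lebesgue. t \<in> {a..b} \<longrightarrow> (L t - k (\<eta> t) * norm (\<eta>' t)) = 0"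
  proof (rule has_integral_nonneg_zero_AE)
    have "w1 (\<eta> b) - w1 (\<eta> a) \<le> integral {a..b} (\<lambda>r. k (\<eta> r) * norm (\<eta>' r))" using calib1[of a b] ab by simp
    moreover have "integral {a..b} (\<lambda>r. k (\<eta> r) * norm (\<eta>' r)) \<le> integral {a..b} L"
      using fi Li amgm by (rule integral_le)
    moreover have "integral {a..b} L = w1 (\<eta> b) - w1 (\<eta> a)" using LI1 by blast
    ultimately have "integral {a..b} L - integral {a..b} (\<lambda>r. k (\<eta> r) * norm (\<eta>' r)) = 0" by simp
    then show "((\<lambda>t. L t - k (\<eta> t) * norm (\<eta>' t)) has_integral 0) {a..b}"
      using has_integral_diff[OF integrable_integral[OF Li] integrable_integral[OF fi]] by simp
  next
    fix t assume "t \<in> {a..b}" then show "L t - k (\<eta> t) * norm (\<eta>' t) \<ge> 0" using amgm by simp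
  qed
  have part1: "AE t in lebesgue. t \<in> {a..b} \<longrightarrow> (1/2) * (norm (\<eta>' t))\<^sup>2 + V (\<eta> t) = c"
    using P1 by eventually_elim (use ptw in blast)
  have "AE t in lebesgue. t \<in> {a..b} \<longrightarrow> norm (\<eta>' t) = k (\<eta> t)"
    using P1 by eventually_elim (use ptw in blast)
  then obtain N2 where N2: "{t \<in> space lebesgue. \<not> (t \<in> {a..b} \<longrightarrow> norm (\<eta>' t) = k (\<eta> t))} \<subseteq> N2"
     "emeasure lebesgue N2 = 0" "N2 \<in> sets lebesgue"
    by (rule AE_E)
  have Nn2: "negligible N2" using N2(2,3) by (simp add: negligible_iff_null_sets null_setsI)
  have nk: "r \<in> {a..b} \<Longrightarrow> r \<notin> N2 \<Longrightarrow> norm (\<eta>' r) = k (\<eta> r)" for r using N2(1) by auto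
  define J where "J p q = integral {p..q} (\<lambda>r. (k (\<eta> r))\<^sup>2)" for p q
  have fJ: "integral {p..q} (\<lambda>r. k (\<eta> r) * norm (\<eta>' r)) = J p q" if "a \<le> p" "q \<le> b" for p q
    unfolding J_def by (rule integral_spike[OF Nn2]) (use nk that in \<open>auto simp: power2_eq_square\<close>)
  have LJ: "integral {a..b} L = J a b"
    unfolding J_def
  proof (rule integral_spike[OF Nn2])
    fix r assume r: "r \<in> {a..b} - N2"
    then have "\<eta> r \<in> U" using sub by auto
    then have K: "(k (\<eta> r))\<^sup>2 = 2 * (c - V (\<eta> r))" by (rule ksq)
    show "(k (\<eta> r))\<^sup>2 = L r" using nk[of r] r K by (simp add: L_def field_simps)
  qed
  have Jadd: "J p q + J q t = J p t" if "a \<le> p" "p \<le> q" "q \<le> t" "t \<le> b" for p q t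
    unfolding J_def
    by (rule Henstock_Kurzweil_Integration.integral_combine) (use that in \<open>auto intro: integrable_subinterval_real[OF k2ei]\<close>)
  have subeq: "w (\<eta> t) - w (\<eta> s) = J s t"
    if w: "\<And>s t. a \<le> s \<Longrightarrow> s \<le> t \<Longrightarrow> t \<le> b \<Longrightarrow> w (\<eta> t) - w (\<eta> s) \<le> integral {s..t} (\<lambda>r. k (\<eta> r) * norm (\<eta>' r))"
      and tot: "w (\<eta> b) - w (\<eta> a) = integral {a..b} L"
      and st: "a \<le> s" "s \<le> t" "t \<le> b" for w :: "real^'n \<Rightarrow> real" and s t
  proof -
    have e1: "w (\<eta> s) - w (\<eta> a) \<le> J a s" using w[of a s] fJ[of a s] st by simp
    have e2: "w (\<eta> t) - w (\<eta> s) \<le> J s t" using w[of s t] fJ[of s t] st by simp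
    have e3: "w (\<eta> b) - w (\<eta> t) \<le> J t b" using w[of t b] fJ[of t b] st by simp
    have "J a s + J s t = J a t" using Jadd[of a s t] st by simp
    moreover have "J a t + J t b = J a b" using Jadd[of a t b] st by simp
    ultimately show ?thesis using e1 e2 e3 tot LJ by linarith
  qed
  have part2: "\<forall>s t. a \<le> s \<and> s \<le> t \<and> t \<le> b \<longrightarrow> w1 (\<eta> t) - w1 (\<eta> s) = integral {s..t} (\<lambda>r. (kk V c (\<eta> r))\<^sup>2)"
  proof (intro allI impI)
    fix s t assume "a \<le> s \<and> s \<le> t \<and> t \<le> b"
    then show "w1 (\<eta> t) - w1 (\<eta> s) = integral {s..t} (\<lambda>r. (kk V c (\<eta> r))\<^sup>2)"
      using subeq[of w1 s t] calib1 LI1 by (auto simp: J_def k_def integral_unique)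
  qed
  have part3: "\<forall>s t. a \<le> s \<and> s \<le> t \<and> t \<le> b \<longrightarrow> w2 (\<eta> t) - w2 (\<eta> s) = integral {s..t} (\<lambda>r. (kk V c (\<eta> r))\<^sup>2)"
  proof (intro allI impI)
    fix s t assume "a \<le> s \<and> s \<le> t \<and> t \<le> b"
    then show "w2 (\<eta> t) - w2 (\<eta> s) = integral {s..t} (\<lambda>r. (kk V c (\<eta> r))\<^sup>2)"
      using subeq[of w2 s t] calib2 LI2 by (auto simp: J_def k_def integral_unique)
  qed
  have part4: "\<forall>s t. a \<le> s \<and> s \<le> t \<and> t \<le> b \<longrightarrow> norm (\<eta> t - \<eta> s) \<le> integral {s..t} (\<lambda>r. kk V c (\<eta> r))"
  proof (intro allI impI)
    fix s t assume st: "a \<le> s \<and> s \<le> t \<and> t \<le> b"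
    have "norm (\<eta> t - \<eta> s) \<le> integral {s..t} (\<lambda>r. norm (\<eta>' r))"
      using eta_bound[OF assms(7) N der ni] st by auto
    also have "integral {s..t} (\<lambda>r. norm (\<eta>' r)) = integral {s..t} (\<lambda>r. kk V c (\<eta> r))"
      by (rule integral_spike[OF Nn2]) (use nk st in \<open>auto simp: k_def\<close>)
    finally show "norm (\<eta> t - \<eta> s) \<le> integral {s..t} (\<lambda>r. kk V c (\<eta> r))" .
  qed
  show ?thesis using part1 part2 part3 part4 by blast
qed


lemma cont_near:
  fixes h :: "real \<Rightarrow> real"
  assumes hc: "continuous_on {a..b} h" and t0: "t0 \<in> {a<..<b}" and e: "e > 0"
  shows "\<exists>\<delta>>0. \<delta> \<le> b - t0 \<and> \<delta> \<le> t0 - a \<and> (\<forall>r. \<bar>r - t0\<bar> \<le> \<delta> \<longrightarrow> \<bar>h r - h t0\<bar> \<le> e)"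
proof -
  have "t0 \<in> {a..b}" using t0 by auto
  then obtain d where d: "d > 0" "\<And>r. r \<in> {a..b} \<Longrightarrow> dist r t0 < d \<Longrightarrow> dist (h r) (h t0) < e"
    using hc e unfolding continuous_on_iff by blast
  define \<delta> where "\<delta> = min (d / 2) (min (b - t0) (t0 - a))"
  have \<delta>: "\<delta> > 0" "\<delta> \<le> b - t0" "\<delta> \<le> t0 - a" using d t0 by (auto simp: \<delta>_def)
  have "\<bar>h r - h t0\<bar> \<le> e" if r: "\<bar>r - t0\<bar> \<le> \<delta>" for r
  proof -
    have "r \<in> {a..b}" using r \<delta> by (auto simp: abs_le_iff)
    moreover have "dist r t0 < d" using r d by (auto simp: dist_real_def \<delta>_def)
    ultimately show ?thesis using d(2)[of r] by (auto simp: dist_real_def)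
  qed
  then show ?thesis using \<delta> by blast
qed

lemma pointwise:
  fixes U :: "(real^'n) set" and w :: "real^'n \<Rightarrow> real" and g :: "real^'n \<Rightarrow> real^'n"
    and \<eta> :: "real \<Rightarrow> real^'n"
  assumes U: "open U" and Vc: "continuous_on UNIV V" and W: "W1inf_grad U w g"
    and bd: "AE v in lebesgue. v \<in> U \<longrightarrow> norm (g v) \<le> kk V c v"
    and AC: "AC_curve a b U \<eta>" and t0: "t0 \<in> {a<..<b}"
    and subeq: "\<forall>s t. a \<le> s \<and> s \<le> t \<and> t \<le> b \<longrightarrow> w (\<eta> t) - w (\<eta> s) = integral {s..t} (\<lambda>r. (kk V c (\<eta> r))\<^sup>2)"
    and etab: "\<forall>s t. a \<le> s \<and> s \<le> t \<and> t \<le> b \<longrightarrow> norm (\<eta> t - \<eta> s) \<le> integral {s..t} (\<lambda>r. kk V c (\<eta> r))"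
    and M: "M > 0" and \<epsilon>: "\<epsilon> > 0"
  shows "\<exists>\<rho>>0. \<forall>y. norm y < \<rho> \<longrightarrow>
           \<bar>w (\<eta> t0 + y) - w (\<eta> t0) - ((\<eta> (t0 + M * norm y) - \<eta> t0) /\<^sub>R (M * norm y)) \<bullet> y\<bar> \<le> (2 / M + 3 * \<epsilon>) * norm y"
proof (rule sandwich[OF kk_nonneg _ _ _ M \<epsilon>])
  define k0 where "k0 = kk V c (\<eta> t0)"
  have etac: "continuous_on {a..b} \<eta>" by (rule AC_cont[OF AC])
  have sub: "\<eta> ` {a..b} \<subseteq> U" using AC by (simp add: AC_curve_def)
  have x: "\<eta> t0 \<in> U" using sub t0 by auto
  have kc: "continuous_on UNIV (kk V c)" by (rule kk_cont[OF Vc])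
  have h1c: "continuous_on {a..b} (\<lambda>r. kk V c (\<eta> r))"
    by (rule continuous_on_compose2[OF kc etac]) auto
  have h2c: "continuous_on {a..b} (\<lambda>r. (kk V c (\<eta> r))\<^sup>2)"
    by (intro continuous_intros h1c)
  have int1: "(\<lambda>r. kk V c (\<eta> r)) integrable_on {p..q}" if "a \<le> p" "q \<le> b" for p q
    by (rule integrable_continuous_interval, rule continuous_on_subset[OF h1c]) (use that in auto)
  have int2: "(\<lambda>r. (kk V c (\<eta> r))\<^sup>2) integrable_on {p..q}" if "a \<le> p" "q \<le> b" for p q
    by (rule integrable_continuous_interval, rule continuous_on_subset[OF h2c]) (use that in auto)
  show "\<exists>r>0. \<forall>y\<in>ball (\<eta> t0) r. \<forall>z\<in>ball (\<eta> t0) r. \<bar>w y - w z\<bar> \<le> (kk V c (\<eta> t0) + e) * norm (y - z)"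
    if e: "e > 0" for e
    using local_lip[OF W U kc bd kk_nonneg x e] by blast
  show "\<exists>\<delta>>0. \<forall>\<tau>. 0 < \<tau> \<and> \<tau> < \<delta> \<longrightarrow>
          \<bar>w (\<eta> (t0 + \<tau>)) - w (\<eta> t0) - \<tau> * (kk V c (\<eta> t0))\<^sup>2\<bar> \<le> e * \<tau> \<and>
          \<bar>w (\<eta> (t0 - \<tau>)) - w (\<eta> t0) + \<tau> * (kk V c (\<eta> t0))\<^sup>2\<bar> \<le> e * \<tau>"
    if e: "e > 0" for e
  proof -
    obtain \<delta> where \<delta>: "\<delta> > 0" "\<delta> \<le> b - t0" "\<delta> \<le> t0 - a"
      "\<And>r. \<bar>r - t0\<bar> \<le> \<delta> \<Longrightarrow> \<bar>(kk V c (\<eta> r))\<^sup>2 - (kk V c (\<eta> t0))\<^sup>2\<bar> \<le> e"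
      using cont_near[OF h2c t0 e] by blast
    show ?thesis
    proof (intro exI[of _ \<delta>] conjI allI impI)
      fix \<tau> assume \<tau>: "0 < \<tau> \<and> \<tau> < \<delta>"
      have A: "w (\<eta> (t0 + \<tau>)) - w (\<eta> t0) = integral {t0..t0 + \<tau>} (\<lambda>r. (kk V c (\<eta> r))\<^sup>2)"
        using subeq \<tau> \<delta> t0 by auto
      have "\<bar>integral {t0..t0 + \<tau>} (\<lambda>r. (kk V c (\<eta> r))\<^sup>2) - (t0 + \<tau> - t0) * (kk V c (\<eta> t0))\<^sup>2\<bar> \<le> e * (t0 + \<tau> - t0)"
        by (rule integral_close) (use \<tau> \<delta> t0 in \<open>auto intro!: int2\<close>)
      then show "\<bar>w (\<eta> (t0 + \<tau>)) - w (\<eta> t0) - \<tau> * (kk V c (\<eta> t0))\<^sup>2\<bar> \<le> e * \<tau>" using A by simp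
      have B: "w (\<eta> t0) - w (\<eta> (t0 - \<tau>)) = integral {t0 - \<tau>..t0} (\<lambda>r. (kk V c (\<eta> r))\<^sup>2)"
        using subeq \<tau> \<delta> t0 by auto
      have "\<bar>integral {t0 - \<tau>..t0} (\<lambda>r. (kk V c (\<eta> r))\<^sup>2) - (t0 - (t0 - \<tau>)) * (kk V c (\<eta> t0))\<^sup>2\<bar> \<le> e * (t0 - (t0 - \<tau>))"
        by (rule integral_close) (use \<tau> \<delta> t0 in \<open>auto intro!: int2\<close>)
      then show "\<bar>w (\<eta> (t0 - \<tau>)) - w (\<eta> t0) + \<tau> * (kk V c (\<eta> t0))\<^sup>2\<bar> \<le> e * \<tau>" using B by (simp add: abs_minus_commute)
    qed (use \<delta> in auto)
  qed
  show "\<exists>\<delta>>0. \<forall>\<tau>. 0 < \<tau> \<and> \<tau> < \<delta> \<longrightarrow>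
          norm (\<eta> (t0 + \<tau>) - \<eta> t0) \<le> (kk V c (\<eta> t0) + e) * \<tau> \<and>
          norm (\<eta> (t0 - \<tau>) - \<eta> t0) \<le> (kk V c (\<eta> t0) + e) * \<tau>"
    if e: "e > 0" for e
  proof -
    obtain \<delta> where \<delta>: "\<delta> > 0" "\<delta> \<le> b - t0" "\<delta> \<le> t0 - a"
      "\<And>r. \<bar>r - t0\<bar> \<le> \<delta> \<Longrightarrow> \<bar>kk V c (\<eta> r) - kk V c (\<eta> t0)\<bar> \<le> e"
      using cont_near[OF h1c t0 e] by blast
    show ?thesis
    proof (intro exI[of _ \<delta>] conjI allI impI)
      fix \<tau> assume \<tau>: "0 < \<tau> \<and> \<tau> < \<delta>"
      have A: "norm (\<eta> (t0 + \<tau>) - \<eta> t0) \<le> integral {t0..t0 + \<tau>} (\<lambda>r. kk V c (\<eta> r))"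
        using etab \<tau> \<delta> t0 by auto
      have "\<bar>integral {t0..t0 + \<tau>} (\<lambda>r. kk V c (\<eta> r)) - (t0 + \<tau> - t0) * kk V c (\<eta> t0)\<bar> \<le> e * (t0 + \<tau> - t0)"
        by (rule integral_close) (use \<tau> \<delta> t0 in \<open>auto intro!: int1\<close>)
      then show "norm (\<eta> (t0 + \<tau>) - \<eta> t0) \<le> (kk V c (\<eta> t0) + e) * \<tau>" using A by (simp add: algebra_simps abs_le_iff)
      have B: "norm (\<eta> t0 - \<eta> (t0 - \<tau>)) \<le> integral {t0 - \<tau>..t0} (\<lambda>r. kk V c (\<eta> r))"
        using etab \<tau> \<delta> t0 by auto
      have "\<bar>integral {t0 - \<tau>..t0} (\<lambda>r. kk V c (\<eta> r)) - (t0 - (t0 - \<tau>)) * kk V c (\<eta> t0)\<bar> \<le> e * (t0 - (t0 - \<tau>))"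
        by (rule integral_close) (use \<tau> \<delta> t0 in \<open>auto intro!: int1\<close>)
      then show "norm (\<eta> (t0 - \<tau>) - \<eta> t0) \<le> (kk V c (\<eta> t0) + e) * \<tau>" using B
        by (simp add: algebra_simps abs_le_iff norm_minus_commute)
    qed (use \<delta> in auto)
  qed
qed


lemma deriv_from_pointwise:
  fixes w :: "'a::real_inner \<Rightarrow> real" and \<eta> :: "real \<Rightarrow> 'a"
  assumes P: "\<And>M \<epsilon>. M > 0 \<Longrightarrow> \<epsilon> > 0 \<Longrightarrow> \<exists>\<rho>>0. \<forall>y. norm y < \<rho> \<longrightarrow>
           \<bar>w (\<eta> t0 + y) - w (\<eta> t0) - ((\<eta> (t0 + M * norm y) - \<eta> t0) /\<^sub>R (M * norm y)) \<bullet> y\<bar> \<le> (2 / M + 3 * \<epsilon>) * norm y"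
    and hvd: "(\<eta> has_vector_derivative vd) (at t0)"
  shows "(w has_derivative (\<lambda>h. vd \<bullet> h)) (at (\<eta> t0))"
  unfolding has_derivative_at_alt
proof (intro conjI allI impI)
  show "bounded_linear (\<lambda>h. vd \<bullet> h)" by (rule bounded_linear_inner_right)
  fix e :: real assume e: "e > 0"
  define M where "M = 8 / e"
  have M: "M > 0" using e by (simp add: M_def)
  have err: "2 / M + 3 * (e / 12) = e / 2" using e by (simp add: M_def field_simps)
  obtain \<rho> where \<rho>: "\<rho> > 0" "\<And>y. norm y < \<rho> \<Longrightarrow>
      \<bar>w (\<eta> t0 + y) - w (\<eta> t0) - ((\<eta> (t0 + M * norm y) - \<eta> t0) /\<^sub>R (M * norm y)) \<bullet> y\<bar> \<le> (e / 2) * norm y"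
  proof -
    have e12: "e / 12 > 0" using e by simp
    show ?thesis using P[OF M e12] that unfolding err by blast
  qed
  have "(\<eta> has_derivative (\<lambda>h. h *\<^sub>R vd)) (at t0)" using hvd by (simp add: has_vector_derivative_def)
  then obtain d1 where d1: "d1 > 0" "\<And>u. norm (u - t0) < d1 \<Longrightarrow> norm (\<eta> u - \<eta> t0 - (u - t0) *\<^sub>R vd) \<le> (e / 2) * norm (u - t0)"
    using e unfolding has_derivative_at_alt by (metis half_gt_zero)
  define d where "d = min \<rho> (d1 / M)"
  have d: "d > 0" using \<rho> d1 M by (simp add: d_def)
  show "\<exists>d>0. \<forall>y. norm (y - \<eta> t0) < d \<longrightarrow> norm (w y - w (\<eta> t0) - vd \<bullet> (y - \<eta> t0)) \<le> e * norm (y - \<eta> t0)"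
  proof (intro exI[of _ d] conjI allI impI)
    fix y assume y: "norm (y - \<eta> t0) < d"
    define h where "h = y - \<eta> t0"
    have yh: "y = \<eta> t0 + h" by (simp add: h_def)
    show "norm (w y - w (\<eta> t0) - vd \<bullet> (y - \<eta> t0)) \<le> e * norm (y - \<eta> t0)"
    proof (cases "h = 0")
      case True then show ?thesis by (simp add: yh)
    next
      case False
      define \<tau> where "\<tau> = M * norm h"
      have \<tau>: "\<tau> > 0" using False M by (simp add: \<tau>_def)
      have \<tau>1: "\<tau> < d1"
      proof -
        have "norm h < d1 / M" using y by (simp add: h_def d_def)
        then show ?thesis using M by (simp add: \<tau>_def field_simps)
      qed
      define v where "v = (\<eta> (t0 + \<tau>) - \<eta> t0) /\<^sub>R \<tau>"
      have A: "\<bar>w (\<eta> t0 + h) - w (\<eta> t0) - v \<bullet> h\<bar> \<le> (e / 2) * norm h"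
        using \<rho>(2)[of h] y by (simp add: h_def d_def v_def \<tau>_def)
      have "norm (\<eta> (t0 + \<tau>) - \<eta> t0 - \<tau> *\<^sub>R vd) \<le> (e / 2) * \<tau>"
        using d1(2)[of "t0 + \<tau>"] \<tau> \<tau>1 by simp
      moreover have "\<eta> (t0 + \<tau>) - \<eta> t0 - \<tau> *\<^sub>R vd = \<tau> *\<^sub>R (v - vd)"
        using \<tau> by (simp add: v_def algebra_simps)
      ultimately have "\<tau> * norm (v - vd) \<le> (e / 2) * \<tau>" using \<tau> by simp
      then have nv: "norm (v - vd) \<le> e / 2" using \<tau> by (simp add: mult.commute)
      have "\<bar>(v - vd) \<bullet> h\<bar> \<le> norm (v - vd) * norm h" by (rule Cauchy_Schwarz_ineq2)
      also have "\<dots> \<le> (e / 2) * norm h" using nv by (intro mult_right_mono) auto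
      finally have B: "\<bar>v \<bullet> h - vd \<bullet> h\<bar> \<le> (e / 2) * norm h" by (simp add: inner_diff_left)
      have "\<bar>w (\<eta> t0 + h) - w (\<eta> t0) - vd \<bullet> h\<bar> \<le> e * norm h" using A B by linarith
      then show ?thesis by (simp add: yh)
    qed
  qed (use d in auto)
qed

lemma zero_deriv_from_pointwise:
  fixes w1 w2 :: "'a::real_inner \<Rightarrow> real" and \<eta> :: "real \<Rightarrow> 'a"
  assumes P1: "\<And>M \<epsilon>. M > 0 \<Longrightarrow> \<epsilon> > 0 \<Longrightarrow> \<exists>\<rho>>0. \<forall>y. norm y < \<rho> \<longrightarrow>
           \<bar>w1 (\<eta> t0 + y) - w1 (\<eta> t0) - ((\<eta> (t0 + M * norm y) - \<eta> t0) /\<^sub>R (M * norm y)) \<bullet> y\<bar> \<le> (2 / M + 3 * \<epsilon>) * norm y"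
    and P2: "\<And>M \<epsilon>. M > 0 \<Longrightarrow> \<epsilon> > 0 \<Longrightarrow> \<exists>\<rho>>0. \<forall>y. norm y < \<rho> \<longrightarrow>
           \<bar>w2 (\<eta> t0 + y) - w2 (\<eta> t0) - ((\<eta> (t0 + M * norm y) - \<eta> t0) /\<^sub>R (M * norm y)) \<bullet> y\<bar> \<le> (2 / M + 3 * \<epsilon>) * norm y"
  shows "((\<lambda>y. w1 y - w2 y) has_derivative (\<lambda>h. 0)) (at (\<eta> t0))"
  unfolding has_derivative_at_alt
proof (intro conjI allI impI)
  show "bounded_linear (\<lambda>h::'a. 0::real)" by (rule bounded_linear_zero)
  fix e :: real assume e: "e > 0"
  define M where "M = 8 / e"
  have M: "M > 0" using e by (simp add: M_def)
  have err: "2 / M + 3 * (e / 12) = e / 2" using e by (simp add: M_def field_simps)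
  obtain \<rho>1 where \<rho>1: "\<rho>1 > 0" "\<And>y. norm y < \<rho>1 \<Longrightarrow>
      \<bar>w1 (\<eta> t0 + y) - w1 (\<eta> t0) - ((\<eta> (t0 + M * norm y) - \<eta> t0) /\<^sub>R (M * norm y)) \<bullet> y\<bar> \<le> (e / 2) * norm y"
  proof -
    have e12: "e / 12 > 0" using e by simp
    show ?thesis using P1[OF M e12] that unfolding err by blast
  qed
  obtain \<rho>2 where \<rho>2: "\<rho>2 > 0" "\<And>y. norm y < \<rho>2 \<Longrightarrow>
      \<bar>w2 (\<eta> t0 + y) - w2 (\<eta> t0) - ((\<eta> (t0 + M * norm y) - \<eta> t0) /\<^sub>R (M * norm y)) \<bullet> y\<bar> \<le> (e / 2) * norm y"
  proof -
    have e12: "e / 12 > 0" using e by simp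
    show ?thesis using P2[OF M e12] that unfolding err by blast
  qed
  show "\<exists>d>0. \<forall>y. norm (y - \<eta> t0) < d \<longrightarrow> norm (w1 y - w2 y - (w1 (\<eta> t0) - w2 (\<eta> t0)) - 0) \<le> e * norm (y - \<eta> t0)"
  proof (intro exI[of _ "min \<rho>1 \<rho>2"] conjI allI impI)
    fix y assume y: "norm (y - \<eta> t0) < min \<rho>1 \<rho>2"
    define h where "h = y - \<eta> t0"
    have yh: "y = \<eta> t0 + h" by (simp add: h_def)
    have A: "\<bar>w1 (\<eta> t0 + h) - w1 (\<eta> t0) - ((\<eta> (t0 + M * norm h) - \<eta> t0) /\<^sub>R (M * norm h)) \<bullet> h\<bar> \<le> (e / 2) * norm h"
      using \<rho>1(2)[of h] y by (simp add: h_def)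
    have B: "\<bar>w2 (\<eta> t0 + h) - w2 (\<eta> t0) - ((\<eta> (t0 + M * norm h) - \<eta> t0) /\<^sub>R (M * norm h)) \<bullet> h\<bar> \<le> (e / 2) * norm h"
      using \<rho>2(2)[of h] y by (simp add: h_def)
    have "\<bar>w1 (\<eta> t0 + h) - w2 (\<eta> t0 + h) - (w1 (\<eta> t0) - w2 (\<eta> t0))\<bar> \<le> e * norm h"
      using A B by linarith
    then show "norm (w1 y - w2 y - (w1 (\<eta> t0) - w2 (\<eta> t0)) - 0) \<le> e * norm (y - \<eta> t0)"
      by (simp add: yh)
  qed (use \<rho>1 \<rho>2 in auto)
qed


theorem mainTheorem4:
  fixes U :: "(real^'n) set" and V :: "real^'n \<Rightarrow> real" and c a b :: real
    and w1 w2 :: "real^'n \<Rightarrow> real" and g1 g2 :: "real^'n \<Rightarrow> real^'n"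
    and \<eta> :: "real \<Rightarrow> real^'n" and \<eta>' :: "real \<Rightarrow> real^'n"
  assumes "open U" and "periodic_potential V"
    and "W1inf_grad U w1 g1" and "W1inf_grad U w2 g2"
    and "AE x in lebesgue. x \<in> U \<longrightarrow> (1/2) * (norm (g1 x))\<^sup>2 + V x \<le> c"
    and "AE x in lebesgue. x \<in> U \<longrightarrow> (1/2) * (norm (g2 x))\<^sup>2 + V x \<le> c"
    and "AC_curve a b U \<eta>"
    and "AE t in lebesgue. t \<in> {a..b} \<longrightarrow> (\<eta> has_vector_derivative \<eta>' t) (at t)"
    and "((\<lambda>t. (1/2) * (norm (\<eta>' t))\<^sup>2 - V (\<eta> t) + c) has_integral (w1 (\<eta> b) - w1 (\<eta> a))) {a..b}"
    and "((\<lambda>t. (1/2) * (norm (\<eta>' t))\<^sup>2 - V (\<eta> t) + c) has_integral (w2 (\<eta> b) - w2 (\<eta> a))) {a..b}"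
  shows "(AE t in lebesgue. t \<in> {a..b} \<longrightarrow> (1/2) * (norm (\<eta>' t))\<^sup>2 + V (\<eta> t) = c)
       \<and> (\<exists>L. L-lipschitz_on {a..b} \<eta>)
       \<and> (\<forall>t0\<in>{a<..<b}. \<eta> differentiable (at t0) \<longrightarrow>
            (w1 has_derivative (\<lambda>h. vector_derivative \<eta> (at t0) \<bullet> h)) (at (\<eta> t0)) \<and>
            (w2 has_derivative (\<lambda>h. vector_derivative \<eta> (at t0) \<bullet> h)) (at (\<eta> t0)))
       \<and> (\<forall>x\<in>\<eta> ` {a<..<b}. ((\<lambda>y. w1 y - w2 y) has_derivative (\<lambda>h. 0)) (at x))"
proof (cases "a \<le> b")
  case False
  then have e1: "{a..b} = {}" "{a<..<b} = {}" by auto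
  have "0-lipschitz_on {a..b} \<eta>" using e1 by (simp add: lipschitz_on_def)
  then show ?thesis using e1 by auto
next
  case ab: True
  note CF = core_facts[OF assms ab]
  have U: "open U" by (rule assms(1))
  have Vc: "continuous_on UNIV V" using assms(2) by (simp add: periodic_potential_def)
  have bd1: "AE v in lebesgue. v \<in> U \<longrightarrow> norm (g1 v) \<le> kk V c v"
    using g_le_k[OF assms(5)] by (simp add: kk_def)
  have bd2: "AE v in lebesgue. v \<in> U \<longrightarrow> norm (g2 v) \<le> kk V c v"
    using g_le_k[OF assms(6)] by (simp add: kk_def)
  have part1: "AE t in lebesgue. t \<in> {a..b} \<longrightarrow> (1/2) * (norm (\<eta>' t))\<^sup>2 + V (\<eta> t) = c"
    using CF by blast
  have sub1: "\<forall>s t. a \<le> s \<and> s \<le> t \<and> t \<le> b \<longrightarrow> w1 (\<eta> t) - w1 (\<eta> s) = integral {s..t} (\<lambda>r. (kk V c (\<eta> r))\<^sup>2)"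
    using CF by blast
  have sub2: "\<forall>s t. a \<le> s \<and> s \<le> t \<and> t \<le> b \<longrightarrow> w2 (\<eta> t) - w2 (\<eta> s) = integral {s..t} (\<lambda>r. (kk V c (\<eta> r))\<^sup>2)"
    using CF by blast
  have etab: "\<forall>s t. a \<le> s \<and> s \<le> t \<and> t \<le> b \<longrightarrow> norm (\<eta> t - \<eta> s) \<le> integral {s..t} (\<lambda>r. kk V c (\<eta> r))"
    using CF by blast
  have etac: "continuous_on {a..b} \<eta>" by (rule AC_cont[OF assms(7)])
  have h1c: "continuous_on {a..b} (\<lambda>r. kk V c (\<eta> r))"
    by (rule continuous_on_compose2[OF kk_cont[OF Vc] etac]) auto
  have "bounded ((\<lambda>r. kk V c (\<eta> r)) ` {a..b})"
    by (rule compact_imp_bounded, rule compact_continuous_image[OF h1c compact_Icc])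
  then obtain Kb where Kb: "\<forall>r\<in>{a..b}. norm (kk V c (\<eta> r)) \<le> Kb" unfolding bounded_iff by blast
  define Lc where "Lc = max 0 Kb"
  have lipst: "norm (\<eta> t - \<eta> s) \<le> Lc * (t - s)" if st: "a \<le> s" "s \<le> t" "t \<le> b" for s t
  proof -
    have "norm (\<eta> t - \<eta> s) \<le> integral {s..t} (\<lambda>r. kk V c (\<eta> r))" using etab st by blast
    also have "\<dots> \<le> integral {s..t} (\<lambda>r. Lc)"
    proof (rule integral_le)
      show "(\<lambda>r. kk V c (\<eta> r)) integrable_on {s..t}"
        by (rule integrable_continuous_interval, rule continuous_on_subset[OF h1c]) (use st in auto)
      show "(\<lambda>r. Lc) integrable_on {s..t}" by (rule integrable_const_ivl)
      fix r assume "r \<in> {s..t}"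
      then have "r \<in> {a..b}" using st by auto
      then have "\<bar>kk V c (\<eta> r)\<bar> \<le> Kb" using Kb by simp
      then show "kk V c (\<eta> r) \<le> Lc" unfolding Lc_def by linarith
    qed
    also have "\<dots> = Lc * (t - s)" using st by simp
    finally show ?thesis .
  qed
  have "Lc-lipschitz_on {a..b} \<eta>"
    unfolding lipschitz_on_def
  proof (intro conjI ballI)
    show "0 \<le> Lc" by (simp add: Lc_def)
    fix x y assume x: "x \<in> {a..b}" and y: "y \<in> {a..b}"
    show "dist (\<eta> x) (\<eta> y) \<le> Lc * dist x y"
    proof (cases "x \<le> y")
      case True
      then show ?thesis using lipst[of x y] x y by (simp add: dist_norm norm_minus_commute dist_real_def)
    next
      case False
      then show ?thesis using lipst[of y x] x y by (simp add: dist_norm dist_real_def)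
    qed
  qed
  then have part2: "\<exists>L. L-lipschitz_on {a..b} \<eta>" by blast
  have P1: "\<exists>\<rho>>0. \<forall>y. norm y < \<rho> \<longrightarrow>
           \<bar>w1 (\<eta> t0 + y) - w1 (\<eta> t0) - ((\<eta> (t0 + M * norm y) - \<eta> t0) /\<^sub>R (M * norm y)) \<bullet> y\<bar> \<le> (2 / M + 3 * \<epsilon>) * norm y"
    if "t0 \<in> {a<..<b}" "M > 0" "\<epsilon> > 0" for t0 M \<epsilon>
    by (rule pointwise[OF U Vc assms(3) bd1 assms(7) that(1) sub1 etab that(2,3)])
  have P2: "\<exists>\<rho>>0. \<forall>y. norm y < \<rho> \<longrightarrow>
           \<bar>w2 (\<eta> t0 + y) - w2 (\<eta> t0) - ((\<eta> (t0 + M * norm y) - \<eta> t0) /\<^sub>R (M * norm y)) \<bullet> y\<bar> \<le> (2 / M + 3 * \<epsilon>) * norm y"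
    if "t0 \<in> {a<..<b}" "M > 0" "\<epsilon> > 0" for t0 M \<epsilon>
    by (rule pointwise[OF U Vc assms(4) bd2 assms(7) that(1) sub2 etab that(2,3)])
  have part3: "\<forall>t0\<in>{a<..<b}. \<eta> differentiable (at t0) \<longrightarrow>
            (w1 has_derivative (\<lambda>h. vector_derivative \<eta> (at t0) \<bullet> h)) (at (\<eta> t0)) \<and>
            (w2 has_derivative (\<lambda>h. vector_derivative \<eta> (at t0) \<bullet> h)) (at (\<eta> t0))"
  proof (intro ballI impI conjI)
    fix t0 assume t0: "t0 \<in> {a<..<b}" and d: "\<eta> differentiable (at t0)"
    have hvd: "(\<eta> has_vector_derivative vector_derivative \<eta> (at t0)) (at t0)"
      using d by (simp add: vector_derivative_works)
    show "(w1 has_derivative (\<lambda>h. vector_derivative \<eta> (at t0) \<bullet> h)) (at (\<eta> t0))"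
      by (rule deriv_from_pointwise[OF P1[OF t0] hvd])
    show "(w2 has_derivative (\<lambda>h. vector_derivative \<eta> (at t0) \<bullet> h)) (at (\<eta> t0))"
      by (rule deriv_from_pointwise[OF P2[OF t0] hvd])
  qed
  have part4: "\<forall>x\<in>\<eta> ` {a<..<b}. ((\<lambda>y. w1 y - w2 y) has_derivative (\<lambda>h. 0)) (at x)"
  proof
    fix x assume "x \<in> \<eta> ` {a<..<b}"
    then obtain t0 where t0: "t0 \<in> {a<..<b}" "x = \<eta> t0" by blast
    show "((\<lambda>y. w1 y - w2 y) has_derivative (\<lambda>h. 0)) (at x)"
      unfolding t0(2) by (rule zero_deriv_from_pointwise[OF P1[OF t0(1)] P2[OF t0(1)]])
  qed
  show ?thesis using part1 part2 part3 part4 by blast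
qed


end
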